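(* Let $t\in((0,1)\cup(1,\infty))\cap\mathbb Q$ be a reduced fraction. Define a word $w$ in the alphabet $\{p,q,r\}$ as follows. If $0<t<1$: for each subword of $\omega_t$ lying between two consecutive occurrences of $z^{\pm1}$, assign the letter $p$ if the subword is of the form $y^{\pm1}$ and the letter $q$ if it is of the form $y^{\pm1}x^{\pm1}y^{\pm1}$; let $w$ be the concatenation of these letters in the order in which the subwords occur in $\omega_t$. If $1<t<\infty$: for each subword of $\omega_t$ lying between two consecutive occurrences of $x^{\pm1}$, assign $q$ if the subword is of the form $y^{\pm1}z^{\pm1}y^{\pm1}$ and $r$ if it is of the form $y^{\pm1}$; let $w$ be the concatenation in order. Then the Cohn word $c_t$ satisfies $c_t=pwq$ if $0<t<1$, and $c_t=qwr$ if $1<t<\infty$.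
   Context: Modified lattice: the planar graph with vertex set $\mathbb Z^2$ whose edges are the horizontal unit segments, the vertical unit segments, and the diagonal segments of slope $-1$ joining $(i,j+1)$ and $(i+1,j)$. Words $\omega_t$: for reduced $t=a/b\in(0,\infty)$, let $L_t$ be the segment from $(0,0)$ to $(b,a)$, oriented from $(0,0)$ to $(b,a)$. List the edges of the modified lattice whose relative interior meets $L_t$, in the order of the intersection points along $L_t$. A horizontal (resp. diagonal, vertical) edge contributes $x$ (resp. $y$, $z$) if its midpoint is not on the right-hand side of $L_t$ (including lying on $L_t$), and $x^{-1}$ (resp. $y^{-1}$, $z^{-1}$) if its midpoint is on the right-hand side. $\omega_t$ is the concatenation of these letters. Cohn word $c_t$ (a word in the free monoid on $\{p,q,r\}$): for reduced $t=a/b\in(0,\infty)$, consider $L_t$ in the ordinary integer grid of $\mathbb R^2$. Each time $L_t$ meets a grid line, take the lattice point adjacent to that intersection on the right-hand side of the oriented segment (if the intersection is itself a lattice point, that lattice point is recorded). Record these lattice points in order as $P_1=(0,0),P_2,\dots,P_n=(b,a)$, discarding repetitions, and join consecutive points by segments. Each segment of slope $0$, $1$, $\infty$ is assigned the letter $p$, $q$, $r$ respectively; $c_t$ is the sequence of these letters in order. (E.g. $c_{2/5}=p^2qpq$ and $c_{5/2}=qrqr^2$.) *)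

theory Defs
  imports Complex_Main
begin

text \<open>Generators x, y, z; a signed letter (g, True) is g, (g, False) is g inverse.\<close>
datatype gen = GX | GY | GZ
type_synonym sletter = "gen \<times> bool"

text \<open>Edges of the modified lattice: Hor i j joins (i,j),(i+1,j); Vert i j joins (i,j),(i,j+1);
  Diag i j joins (i,j+1),(i+1,j) (slope -1).\<close>
datatype lat_kind = Hor | Diag | Vert
type_synonym edge = "lat_kind \<times> int \<times> int"

fun edge_pt :: "edge \<Rightarrow> real \<Rightarrow> real \<times> real" where
  "edge_pt (Hor, i, j) u = (of_int i + u, of_int j)"
| "edge_pt (Diag, i, j) u = (of_int i + u, of_int j + 1 - u)"
| "edge_pt (Vert, i, j) u = (of_int i, of_int j + u)"

definition Lpt :: "int \<Rightarrow> int \<Rightarrow> real \<Rightarrow> real \<times> real" where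
  "Lpt a b s = (s * of_int b, s * of_int a)"

definition on_right :: "int \<Rightarrow> int \<Rightarrow> real \<times> real \<Rightarrow> bool" where
  "on_right a b P \<longleftrightarrow> of_int b * snd P - of_int a * fst P < 0"

definition meets_at :: "int \<Rightarrow> int \<Rightarrow> edge \<Rightarrow> real \<Rightarrow> bool" where
  "meets_at a b e s \<longleftrightarrow> 0 \<le> s \<and> s \<le> 1 \<and> (\<exists>u. 0 < u \<and> u < 1 \<and> Lpt a b s = edge_pt e u)"

definition crossed_edges :: "int \<Rightarrow> int \<Rightarrow> edge set" where
  "crossed_edges a b = {e. \<exists>s. meets_at a b e s}"

definition hit_param :: "int \<Rightarrow> int \<Rightarrow> edge \<Rightarrow> real" where
  "hit_param a b e = (THE s. meets_at a b e s)"

fun kind_gen :: "lat_kind \<Rightarrow> gen" where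
  "kind_gen Hor = GX" | "kind_gen Diag = GY" | "kind_gen Vert = GZ"

definition edge_letter :: "int \<Rightarrow> int \<Rightarrow> edge \<Rightarrow> sletter" where
  "edge_letter a b e = (kind_gen (fst e), \<not> on_right a b (edge_pt e (1/2)))"

definition omega_edges :: "int \<Rightarrow> int \<Rightarrow> edge list" where
  "omega_edges a b = (THE es. set es = crossed_edges a b \<and>
      sorted_wrt (\<lambda>e f. hit_param a b e < hit_param a b f) es)"

definition omega_ab :: "int \<Rightarrow> int \<Rightarrow> sletter list" where
  "omega_ab a b = map (edge_letter a b) (omega_edges a b)"

definition omega :: "rat \<Rightarrow> sletter list" where
  "omega t = (case quotient_of t of (a, b) \<Rightarrow> omega_ab a b)"

datatype cletter = Cp | Cq | Cr

definition grid_params :: "int \<Rightarrow> int \<Rightarrow> real set" where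
  "grid_params a b = {s. 0 \<le> s \<and> s \<le> 1 \<and> (s * of_int b \<in> \<int> \<or> s * of_int a \<in> \<int>)}"

text \<open>The lattice point recorded at the intersection with parameter s: among the two lattice
  points adjacent to the intersection on the grid line, the one on the right-hand side, or the
  intersection itself if it is a lattice point.\<close>
definition rec_pt :: "int \<Rightarrow> int \<Rightarrow> real \<Rightarrow> int \<times> int" where
  "rec_pt a b s = (let P = Lpt a b s;
     C = (if fst P \<in> \<int> then {(\<lfloor>fst P\<rfloor>, \<lfloor>snd P\<rfloor>), (\<lfloor>fst P\<rfloor>, \<lceil>snd P\<rceil>)}
          else {(\<lfloor>fst P\<rfloor>, \<lfloor>snd P\<rfloor>), (\<lceil>fst P\<rceil>, \<lfloor>snd P\<rfloor>)})
   in THE Q. Q \<in> C \<and> ((of_int (fst Q), of_int (snd Q)) = P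
                        \<or> on_right a b (of_int (fst Q), of_int (snd Q))))"

definition cohn_points :: "int \<Rightarrow> int \<Rightarrow> (int \<times> int) list" where
  "cohn_points a b = remdups_adj (map (rec_pt a b) (sorted_list_of_set (grid_params a b)))"

definition seg_letter :: "int \<times> int \<Rightarrow> int \<times> int \<Rightarrow> cletter option" where
  "seg_letter P Q = (let dx = fst Q - fst P; dy = snd Q - snd P in
     if dy = 0 \<and> dx \<noteq> 0 then Some Cp
     else if dx = dy \<and> dx \<noteq> 0 then Some Cq
     else if dx = 0 \<and> dy \<noteq> 0 then Some Cr
     else None)"

definition cohn_ab :: "int \<Rightarrow> int \<Rightarrow> cletter list option" where
  "cohn_ab a b = (let ps = cohn_points a b in
     those (map (\<lambda>(P, Q). seg_letter P Q) (zip ps (tl ps))))"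

definition cohn_word :: "rat \<Rightarrow> cletter list option" where
  "cohn_word t = (case quotient_of t of (a, b) \<Rightarrow> cohn_ab a b)"

definition between_blocks :: "('a \<Rightarrow> bool) \<Rightarrow> 'a list \<Rightarrow> 'a list list" where
  "between_blocks P xs = (let ps = filter (\<lambda>i. P (xs ! i)) [0..<length xs] in
     map (\<lambda>(i, j). take (j - Suc i) (drop (Suc i) xs)) (zip ps (tl ps)))"

fun block_lt :: "sletter list \<Rightarrow> cletter option" where
  "block_lt [(GY, _)] = Some Cp"
| "block_lt [(GY, _), (GX, _), (GY, _)] = Some Cq"
| "block_lt _ = None"

fun block_gt :: "sletter list \<Rightarrow> cletter option" where
  "block_gt [(GY, _), (GZ, _), (GY, _)] = Some Cq"
| "block_gt [(GY, _)] = Some Cr"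
| "block_gt _ = None"

definition w_word :: "rat \<Rightarrow> cletter list option" where
  "w_word t = (if t < 1
     then those (map block_lt (between_blocks (\<lambda>l. fst l = GZ) (omega t)))
     else those (map block_gt (between_blocks (\<lambda>l. fst l = GX) (omega t))))"

end

theory Submission
  imports Defs
begin

definition J :: "int \<Rightarrow> int \<Rightarrow> int \<Rightarrow> int" where "J p q i = i * p div q"

lemma J_bounds:
  assumes "0 < q" shows "q * J p q i \<le> i * p" "i * p < q * (J p q i + 1)"
proof -
  have e: "i * p = q * J p q i + i * p mod q" unfolding J_def by simp
  have "0 \<le> i * p mod q" "i * p mod q < q" using assms by auto
  then show "q * J p q i \<le> i * p" "i * p < q * (J p q i + 1)" using e by (simp_all add: algebra_simps)
qed

lemma J_unique:
  assumes "0 < q" "q * j \<le> i * p" "i * p < q * (j + 1)" shows "J p q i = j"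
proof -
  have a: "q * J p q i \<le> i * p" "i * p < q * (J p q i + 1)" using J_bounds[OF assms(1)] by auto
  have "J p q i < j + 1"
  proof -
    have "q * J p q i < q * (j+1)" using a assms by linarith
    then show ?thesis using assms(1) by (simp add: mult_less_cancel_left)
  qed
  moreover have "j < J p q i + 1"
  proof -
    have "q * j < q * (J p q i + 1)" using a assms by linarith
    then show ?thesis using assms(1) by (simp add: mult_less_cancel_left)
  qed
  ultimately show ?thesis by linarith
qed

lemma J_lower: assumes "0 < q" "q * j \<le> i * p" shows "j \<le> J p q i"
proof -
  have a: "i * p < q * (J p q i + 1)" using J_bounds[OF assms(1)] by auto
  have "q * j < q * (J p q i + 1)" using a assms by linarith
  then have "j < J p q i + 1" using assms(1) by (simp add: mult_less_cancel_left)
  then show ?thesis by simp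
qed

lemma J_upper: assumes "0 < q" "i * p < q * (j + 1)" shows "J p q i \<le> j"
proof -
  have a: "q * J p q i \<le> i * p" using J_bounds[OF assms(1)] by auto
  have "q * J p q i < q * (j + 1)" using a assms by linarith
  then have "J p q i < j + 1" using assms(1) by (simp add: mult_less_cancel_left)
  then show ?thesis by simp
qed

lemma J_mono: assumes "0 < q" "0 \<le> p" "i \<le> i'" shows "J p q i \<le> J p q i'"
  unfolding J_def using assms by (intro zdiv_mono1) (auto intro: mult_right_mono)

lemma J_step: assumes "0 < q" "p \<le> q" shows "J p q (i+1) \<le> J p q i + 1"
proof (rule J_upper[OF assms(1)])
  have a: "i * p < q * (J p q i + 1)" using J_bounds[OF assms(1)] by auto
  show "(i + 1) * p < q * (J p q i + 1 + 1)" using a assms by (simp add: algebra_simps)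
qed

lemma J_0[simp]: "J p q 0 = 0" by (simp add: J_def)
lemma J_q: "0 < q \<Longrightarrow> J p q q = p" by (simp add: J_def)
lemma J_1: "0 \<le> p \<Longrightarrow> p < q \<Longrightarrow> J p q 1 = 0" by (simp add: J_def)
lemma J_nonneg: "0 < q \<Longrightarrow> 0 \<le> p \<Longrightarrow> 0 \<le> i \<Longrightarrow> 0 \<le> J p q i"
  by (simp add: J_def pos_imp_zdiv_nonneg_iff)

lemma J_qm1: assumes "0 < p" "p \<le> q" shows "J p q (q - 1) = p - 1"
proof (rule J_unique)
  show "0 < q" using assms by simp
  have "q * (p - 1) = q * p - q" "(q - 1) * p = q * p - p" by (simp_all add: algebra_simps)
  then show "q * (p - 1) \<le> (q - 1) * p" "(q - 1) * p < q * (p - 1 + 1)" using assms by simp_all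
qed

lemma not_dvd_coprime: fixes p q i :: int assumes "coprime p q" "0 < i" "i < q" shows "\<not> q dvd i * p"
proof
  assume "q dvd i * p"
  then have "q dvd i" using assms(1) using coprime_dvd_mult_left_iff[of q p i] assms(1) by (simp add: coprime_commute)
  then show False using assms zdvd_imp_le by fastforce
qed

lemma J_strict: assumes "0 < q" "coprime p q" "0 < i" "i < q" shows "q * J p q i < i * p"
proof -
  have "q * J p q i \<noteq> i * p" using not_dvd_coprime[OF assms(2-4)] by (metis dvd_triv_left)
  then show ?thesis using J_bounds[OF assms(1)] by (simp add: order_le_neq_trans)
qed

lemma sep_lemma:
  assumes "0 < q" "q * j < i * p" "i * p < q * (j + 1)" "0 \<le> i" "i \<le> q"
  shows "0 < i" "i < q" "J p q i = j"
proof -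
  show "J p q i = j" using J_unique[OF assms(1)] assms by simp
  show "0 < i"
  proof (rule ccontr)
    assume "\<not> 0 < i" then have "i = 0" using assms by simp
    then have "q * j < q * 0" "q * 0 < q * (j + 1)" using assms by simp_all
    then have "j < 0" "0 < j + 1" using assms(1) mult_less_cancel_left_pos by blast+
    then show False by simp
  qed
  show "i < q"
  proof (rule ccontr)
    assume "\<not> i < q" then have "i = q" using assms by simp
    then have "q * j < q * p" "q * p < q * (j + 1)" using assms by (simp_all add: mult.commute)
    then have "j < p" "p < j + 1" using assms(1) mult_less_cancel_left_pos by blast+
    then show False by simp
  qed
qed

lemma key_lemma:
  assumes "0 < p" "p < q" "coprime p q" "0 < j" "j < p"
  defines "i \<equiv> J q p j"
  shows "0 \<le> i" "i + 1 < q" "J p q i + 1 = j" "J p q (i + 1) = j" "i * p < j * q" "j * q < (i + 1) * p"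
proof -
  have cqp: "coprime q p" using assms(3) by (simp add: coprime_commute)
  have b1: "p * i < j * q" using J_strict[OF assms(1) cqp assms(4) assms(5)] unfolding i_def .
  have b2: "j * q < p * (i + 1)" using J_bounds(2)[OF assms(1), of j q] unfolding i_def .
  show "i * p < j * q" using b1 by (simp add: mult.commute)
  show "j * q < (i + 1) * p" using b2 by (simp add: mult.commute)
  show i0: "0 \<le> i" unfolding i_def using assms by (intro J_nonneg) auto
  have u: "J p q i \<le> j - 1" using b1 assms by (intro J_upper) (auto simp: mult.commute)
  have l: "j \<le> J p q (i + 1)" using b2 assms by (intro J_lower) (auto simp: mult.commute)
  have st: "J p q (i + 1) \<le> J p q i + 1" using assms by (intro J_step) auto
  show "J p q i + 1 = j" "J p q (i + 1) = j" using u l st by simp_all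
  show "i + 1 < q"
  proof (rule ccontr)
    assume "\<not> i + 1 < q"
    then have "J p q q \<le> J p q (i + 1)" using assms by (intro J_mono) auto
    then have "p \<le> J p q (i + 1)" using assms J_q by simp
    then show False using u l st assms by simp
  qed
qed

lemma diag_lemma:
  assumes "0 < p" "p \<le> q" "i * p < q * (j + 1)" "q * j < p * (i + 1)" "0 \<le> i + j + 1" "i + j + 1 \<le> p + q"
  shows "0 \<le> i" "i < q" "j = J p q i \<or> (j = J p q i + 1 \<and> J p q (i + 1) = J p q i + 1 \<and> i + 1 < q)"
proof -
  have q0: "0 < q" using assms by simp
  show i0: "0 \<le> i"
  proof (rule ccontr)
    assume "\<not> 0 \<le> i" then have "i + 1 \<le> 0" by simp
    then have "p * (i + 1) \<le> 0" using assms(1) by (simp add: mult_nonneg_nonpos)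
    then have "q * j < 0" using assms by simp
    then have "j < 0" using q0 by (simp add: mult_less_0_iff)
    then show False using assms \<open>i + 1 \<le> 0\<close> by simp
  qed
  show iq: "i < q"
  proof (rule ccontr)
    assume "\<not> i < q" then have "q \<le> i" by simp
    then have "q * p \<le> i * p" using assms(1) by (simp add: mult_right_mono)
    then have "q * p < q * (j + 1)" using assms(3) by linarith
    then have "p < j + 1" using q0 mult_less_cancel_left_pos by blast
    then show False using assms \<open>q \<le> i\<close> by simp
  qed
  have u: "J p q i \<le> j" using assms q0 by (intro J_upper) auto
  have l: "j \<le> J p q (i + 1)" using assms q0 by (intro J_lower) (auto simp: mult.commute)
  have st: "J p q (i + 1) \<le> J p q i + 1" using assms by (intro J_step) auto
  show "j = J p q i \<or> (j = J p q i + 1 \<and> J p q (i + 1) = J p q i + 1 \<and> i + 1 < q)"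
  proof (cases "j = J p q i")
    case False
    then have j: "j = J p q i + 1" "J p q (i + 1) = J p q i + 1" using u l st by simp_all
    have "i + 1 < q"
    proof (rule ccontr)
      assume "\<not> i + 1 < q" then have "i + 1 = q" using iq by simp
      then have "j = p" using j J_q[OF q0, of p] by simp
      then show False using assms(4) \<open>i + 1 = q\<close> by (simp add: mult.commute)
    qed
    then show ?thesis using j by simp
  qed simp
qed

fun ok :: "int \<Rightarrow> int \<Rightarrow> edge \<Rightarrow> bool" where
  "ok a b (Hor, i, j) = (0 \<le> j \<and> j \<le> a \<and> i * a < j * b \<and> j * b < (i + 1) * a)"
| "ok a b (Vert, i, j) = (0 \<le> i \<and> i \<le> b \<and> j * b < i * a \<and> i * a < (j + 1) * b)"
| "ok a b (Diag, i, j) = (0 \<le> i + j + 1 \<and> i + j + 1 \<le> a + b \<and> i * a < (j + 1) * b \<and> j * b < (i + 1) * a)"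

fun hp :: "int \<Rightarrow> int \<Rightarrow> edge \<Rightarrow> real" where
  "hp a b (Hor, i, j) = of_int j / of_int a"
| "hp a b (Vert, i, j) = of_int i / of_int b"
| "hp a b (Diag, i, j) = of_int (i + j + 1) / of_int (a + b)"

lemma zero_le_div_pos: "(c::real) > 0 \<Longrightarrow> 0 \<le> x / c \<longleftrightarrow> 0 \<le> x"
  by (simp add: zero_le_divide_iff)

lemma meets_Hor:
  assumes "0 < a" "0 < b"
  shows "meets_at a b (Hor, i, j) s \<longleftrightarrow> s = hp a b (Hor, i, j) \<and> ok a b (Hor, i, j)"
proof -
  have A: "real_of_int a > 0" "real_of_int b > 0" using assms by auto
  have "meets_at a b (Hor, i, j) s \<longleftrightarrow> 0 \<le> s \<and> s \<le> 1 \<and> s * a = j \<and> i < s * b \<and> s * b < i + 1"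
    unfolding meets_at_def Lpt_def by (auto simp: algebra_simps intro!: exI[of _ "s * b - i"])
  also have "\<dots> \<longleftrightarrow> s = j / a \<and> 0 \<le> j / a \<and> j / a \<le> 1 \<and> i < j / a * b \<and> j / a * b < i + 1"
  proof -
    have e: "s * a = j \<longleftrightarrow> s = j / a" using A by (auto simp: eq_divide_eq)
    show ?thesis by (simp only: e) auto
  qed
  also have "\<dots> \<longleftrightarrow> s = j / a \<and> 0 \<le> j \<and> j \<le> a \<and> i * a < j * b \<and> j * b < (i + 1) * a"
  proof -
    have "0 \<le> real_of_int j / a \<longleftrightarrow> 0 \<le> j" using A by (simp add: zero_le_divide_iff)
    moreover have "real_of_int j / a \<le> 1 \<longleftrightarrow> j \<le> a" using A by (simp add: divide_le_eq_1)
    moreover have "real_of_int i < j / a * b \<longleftrightarrow> i * a < j * b"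
    proof -
      have "real_of_int i < j / a * b \<longleftrightarrow> real_of_int i * a < j * b" using A by (simp add: field_simps)
      also have "\<dots> \<longleftrightarrow> i * a < j * b" by (metis of_int_less_iff of_int_mult)
      finally show ?thesis .
    qed
    moreover have "j / a * b < real_of_int (i + 1) \<longleftrightarrow> j * b < (i + 1) * a"
    proof -
      have "j / a * b < real_of_int (i + 1) \<longleftrightarrow> real_of_int j * b < (i + 1) * a" using A by (simp add: field_simps)
      also have "\<dots> \<longleftrightarrow> j * b < (i + 1) * a" by (metis of_int_less_iff of_int_mult of_int_add of_int_1)
      finally show ?thesis .
    qed
    ultimately show ?thesis by blast
  qed
  finally show ?thesis by simp
qed

lemma meets_Vert:
  assumes "0 < a" "0 < b"
  shows "meets_at a b (Vert, i, j) s \<longleftrightarrow> s = hp a b (Vert, i, j) \<and> ok a b (Vert, i, j)"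
proof -
  have A: "real_of_int a > 0" "real_of_int b > 0" using assms by auto
  have "meets_at a b (Vert, i, j) s \<longleftrightarrow> 0 \<le> s \<and> s \<le> 1 \<and> s * b = i \<and> j < s * a \<and> s * a < real_of_int (j + 1)"
    unfolding meets_at_def Lpt_def by (auto simp: algebra_simps intro!: exI[of _ "s * a - j"])
  also have "\<dots> \<longleftrightarrow> s = i / b \<and> 0 \<le> i / b \<and> i / b \<le> 1 \<and> j < i / b * a \<and> i / b * a < real_of_int (j + 1)"
  proof -
    have e: "s * b = i \<longleftrightarrow> s = i / b" using A by (auto simp: eq_divide_eq)
    show ?thesis by (simp only: e) auto
  qed
  also have "\<dots> \<longleftrightarrow> s = i / b \<and> 0 \<le> i \<and> i \<le> b \<and> j * b < i * a \<and> i * a < (j + 1) * b"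
  proof -
    have "0 \<le> real_of_int i / b \<longleftrightarrow> 0 \<le> i" using A by (simp add: zero_le_divide_iff)
    moreover have "real_of_int i / b \<le> 1 \<longleftrightarrow> i \<le> b" using A by (simp add: divide_le_eq_1)
    moreover have "real_of_int j < i / b * a \<longleftrightarrow> j * b < i * a"
    proof -
      have "real_of_int j < i / b * a \<longleftrightarrow> real_of_int j * b < i * a" using A by (simp add: field_simps)
      also have "\<dots> \<longleftrightarrow> j * b < i * a" by (metis of_int_less_iff of_int_mult)
      finally show ?thesis .
    qed
    moreover have "i / b * a < real_of_int (j + 1) \<longleftrightarrow> i * a < (j + 1) * b"
    proof -
      have "i / b * a < real_of_int (j + 1) \<longleftrightarrow> real_of_int i * a < (j + 1) * b" using A by (simp add: field_simps)
      also have "\<dots> \<longleftrightarrow> i * a < (j + 1) * b" by (metis of_int_less_iff of_int_mult of_int_add of_int_1)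
      finally show ?thesis .
    qed
    ultimately show ?thesis by blast
  qed
  finally show ?thesis by simp
qed

lemma meets_Diag:
  assumes "0 < a" "0 < b"
  shows "meets_at a b (Diag, i, j) s \<longleftrightarrow> s = hp a b (Diag, i, j) \<and> ok a b (Diag, i, j)"
proof -
  have A: "real_of_int a > 0" "real_of_int b > 0" "real_of_int (a + b) > 0" using assms by auto
  have "meets_at a b (Diag, i, j) s \<longleftrightarrow> 0 \<le> s \<and> s \<le> 1 \<and> s * real_of_int (a + b) = real_of_int (i + j + 1) \<and> i < s * b \<and> s * b < real_of_int (i + 1)"
    unfolding meets_at_def Lpt_def by (auto simp: algebra_simps intro!: exI[of _ "s * b - i"])
  also have "\<dots> \<longleftrightarrow> s = real_of_int (i + j + 1) / real_of_int (a + b) \<and> 0 \<le> real_of_int (i + j + 1) / real_of_int (a + b) \<and> real_of_int (i + j + 1) / real_of_int (a + b) \<le> 1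
       \<and> i < real_of_int (i + j + 1) / real_of_int (a + b) * b \<and> real_of_int (i + j + 1) / real_of_int (a + b) * b < real_of_int (i + 1)"
  proof -
    have e: "s * real_of_int (a + b) = real_of_int (i + j + 1) \<longleftrightarrow> s = real_of_int (i + j + 1) / real_of_int (a + b)" using A by (auto simp: eq_divide_eq)
    show ?thesis by (simp only: e) auto
  qed
  also have "\<dots> \<longleftrightarrow> s = real_of_int (i + j + 1) / real_of_int (a + b) \<and> 0 \<le> i + j + 1 \<and> i + j + 1 \<le> a + b \<and> i * a < (j + 1) * b \<and> j * b < (i + 1) * a"
  proof -
    have "0 \<le> real_of_int (i + j + 1) / real_of_int (a + b) \<longleftrightarrow> 0 \<le> i + j + 1"
      using zero_le_div_pos[OF A(3), of "real_of_int (i + j + 1)"] of_int_0_le_iff by blast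
    moreover have "real_of_int (i + j + 1) / real_of_int (a + b) \<le> 1 \<longleftrightarrow> i + j + 1 \<le> a + b" by (simp only: divide_le_eq_1_pos[OF A(3)] of_int_le_iff)
    moreover have "real_of_int i < real_of_int (i + j + 1) / real_of_int (a + b) * b \<longleftrightarrow> i * a < (j + 1) * b"
    proof -
      have "real_of_int i < real_of_int (i + j + 1) / real_of_int (a + b) * b \<longleftrightarrow> real_of_int (i * a) < real_of_int ((j + 1) * b)"
        using A by (simp add: field_simps)
      then show ?thesis by (simp only: of_int_less_iff)
    qed
    moreover have "real_of_int (i + j + 1) / real_of_int (a + b) * b < real_of_int (i + 1) \<longleftrightarrow> j * b < (i + 1) * a"
    proof -
      have "real_of_int (i + j + 1) / real_of_int (a + b) * b < real_of_int (i + 1) \<longleftrightarrow> real_of_int (j * b) < real_of_int ((i + 1) * a)"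
        using A by (simp add: field_simps)
      then show ?thesis by (simp only: of_int_less_iff)
    qed
    ultimately show ?thesis by (simp add: add.assoc)
  qed
  finally show ?thesis by (simp add: add.assoc)
qed

lemma meets_iff:
  assumes "0 < a" "0 < b"
  shows "meets_at a b e s \<longleftrightarrow> s = hp a b e \<and> ok a b e"
proof -
  obtain k i j where e: "e = (k, i, j)" by (cases e rule: prod_cases3)
  show ?thesis unfolding e using meets_Hor[OF assms] meets_Vert[OF assms] meets_Diag[OF assms]
    by (cases k) simp_all
qed

lemma crossed_iff:
  assumes "0 < a" "0 < b"
  shows "e \<in> crossed_edges a b \<longleftrightarrow> ok a b e"
proof -
  have "(\<exists>s. meets_at a b e s) \<longleftrightarrow> ok a b e" by (simp add: meets_iff[OF assms])
  then show ?thesis unfolding crossed_edges_def by simp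
qed

lemma hit_param_eq:
  assumes "0 < a" "0 < b" "ok a b e"
  shows "hit_param a b e = hp a b e"
  unfolding hit_param_def by (rule the_equality) (simp_all add: meets_iff[OF assms(1,2)] assms(3))

lemma omega_edges_eq:
  assumes "set es = crossed_edges a b" "sorted_wrt (\<lambda>e f. hit_param a b e < hit_param a b f) es"
  shows "omega_edges a b = es"
  unfolding omega_edges_def
proof (rule the_equality)
  show "set es = crossed_edges a b \<and> sorted_wrt (\<lambda>e f. hit_param a b e < hit_param a b f) es"
    using assms by simp
  fix es' assume h: "set es' = crossed_edges a b \<and> sorted_wrt (\<lambda>e f. hit_param a b e < hit_param a b f) es'"
  let ?h = "hit_param a b"
  have s1: "sorted_wrt (<) (map ?h es)" using assms(2) by (simp add: sorted_wrt_map)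
  have s2: "sorted_wrt (<) (map ?h es')" using h by (simp add: sorted_wrt_map)
  have "map ?h es' = map ?h es"
    using s1 s2 h assms(1) by (intro sorted_distinct_set_unique) (auto simp: strict_sorted_iff)
  moreover have "inj_on ?h (set es' \<union> set es)"
    using s1 h assms(1) by (simp add: strict_sorted_iff distinct_map)
  ultimately show "es' = es" using inj_on_map_eq_map by blast
qed

fun sw :: "edge \<Rightarrow> edge" where
  "sw (Hor, i, j) = (Vert, j, i)"
| "sw (Vert, i, j) = (Hor, j, i)"
| "sw (Diag, i, j) = (Diag, j, i)"

lemma ok_sw: "ok a b (sw e) = ok b a e"
proof -
  obtain k i j where e: "e = (k, i, j)" by (cases e rule: prod_cases3)
  show ?thesis unfolding e by (cases k) (auto simp: algebra_simps)
qed

lemma hp_sw: "hp a b (sw e) = hp b a e"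
proof -
  obtain k i j where e: "e = (k, i, j)" by (cases e rule: prod_cases3)
  show ?thesis unfolding e by (cases k) (auto simp: algebra_simps)
qed

lemma sw_sw[simp]: "sw (sw e) = e"
proof -
  obtain k i j where e: "e = (k, i, j)" by (cases e rule: prod_cases3)
  show ?thesis unfolding e by (cases k) auto
qed

lemma omega_edges_from_ok:
  assumes "0 < a" "0 < b" "set es = {e. ok a b e}" "sorted_wrt (\<lambda>e f. hp a b e < hp a b f) es"
  shows "omega_edges a b = es"
proof (rule omega_edges_eq)
  show "set es = crossed_edges a b" using assms crossed_iff by auto
  have "map (hit_param a b) es = map (hp a b) es"
    using assms(3) hit_param_eq[OF assms(1,2)] by (intro map_cong) auto
  then show "sorted_wrt (\<lambda>e f. hit_param a b e < hit_param a b f) es"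
    using assms(4) by (metis sorted_wrt_map)
qed

lemma omega_edges_swap:
  assumes "0 < a" "0 < b" "set es = {e. ok b a e}" "sorted_wrt (\<lambda>e f. hp b a e < hp b a f) es"
  shows "omega_edges a b = map sw es"
proof (rule omega_edges_from_ok[OF assms(1,2)])
  show "set (map sw es) = {e. ok a b e}"
  proof (intro set_eqI iffI)
    fix e assume "e \<in> set (map sw es)" then show "e \<in> {e. ok a b e}" using assms(3) ok_sw by auto
  next
    fix e assume "e \<in> {e. ok a b e}"
    then have "sw e \<in> set es" using assms(3) ok_sw[of b a e] by simp
    then have "sw (sw e) \<in> sw ` set es" by (rule imageI)
    then show "e \<in> set (map sw es)" by simp
  qed
  show "sorted_wrt (\<lambda>e f. hp a b e < hp a b f) (map sw es)"
    using assms(4) by (simp add: sorted_wrt_map hp_sw)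
qed

lemma frac_less:
  assumes "0 < y" "0 < w"
  shows "real_of_int x / real_of_int y < real_of_int z / real_of_int w \<longleftrightarrow> x * w < z * y"
proof -
  have "real_of_int x / real_of_int y < real_of_int z / real_of_int w \<longleftrightarrow> real_of_int (x * w) < real_of_int (z * y)"
    using assms by (simp add: field_simps)
  then show ?thesis by (simp only: of_int_less_iff)
qed

lemma frac_le:
  assumes "0 < y" "0 < w"
  shows "real_of_int x / real_of_int y \<le> real_of_int z / real_of_int w \<longleftrightarrow> x * w \<le> z * y"
proof -
  have "real_of_int x / real_of_int y \<le> real_of_int z / real_of_int w \<longleftrightarrow> real_of_int (x * w) \<le> real_of_int (z * y)"
    using assms by (simp add: field_simps)
  then show ?thesis by (simp only: of_int_le_iff)
qed

lemma sorted_concat_blocks: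
  fixes f :: "'a \<Rightarrow> real" and lo :: "nat \<Rightarrow> real"
  assumes "\<And>k. k < n \<Longrightarrow> sorted_wrt (\<lambda>x y. f x < f y) (F k)"
    "\<And>k x. k < n \<Longrightarrow> x \<in> set (F k) \<Longrightarrow> lo k < f x \<and> f x \<le> lo (Suc k)"
    "\<And>k k'. k \<le> k' \<Longrightarrow> lo k \<le> lo k'"
  shows "sorted_wrt (\<lambda>x y. f x < f y) (concat (map F [0..<n]))"
  using assms
proof (induction n)
  case 0 then show ?case by simp
next
  case (Suc n)
  have "\<forall>x\<in>set (concat (map F [0..<n])). \<forall>y\<in>set (F n). f x < f y"
  proof (intro ballI)
    fix x y assume x: "x \<in> set (concat (map F [0..<n]))" and y: "y \<in> set (F n)"
    from x obtain k where k: "k < n" "x \<in> set (F k)" by auto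
    have "f x \<le> lo (Suc k)" using Suc.prems(2)[of k x] k by simp
    also have "\<dots> \<le> lo n" using k Suc.prems(3) by simp
    also have "\<dots> < f y" using Suc.prems(2)[of n y] y by simp
    finally show "f x < f y" .
  qed
  then show ?case using Suc by (simp add: sorted_wrt_append)
qed

definition Bc :: "int \<Rightarrow> int \<Rightarrow> int \<Rightarrow> bool" where
  "Bc a b i \<longleftrightarrow> i + 1 < b \<and> J a b (i + 1) = J a b i + 1"
definition Dblk :: "int \<Rightarrow> int \<Rightarrow> int \<Rightarrow> edge list" where
  "Dblk a b i = (if Bc a b i then [(Diag, i, J a b i), (Hor, i, J a b i + 1), (Diag, i, J a b i + 1)]
     else [(Diag, i, J a b i)])"
definition sepE :: "int \<Rightarrow> int \<Rightarrow> int \<Rightarrow> edge list" where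
  "sepE a b i = (if i + 1 < b then [(Vert, i + 1, J a b (i + 1))] else [])"
definition colE :: "int \<Rightarrow> int \<Rightarrow> int \<Rightarrow> edge list" where
  "colE a b i = Dblk a b i @ sepE a b i"
definition Ea :: "int \<Rightarrow> int \<Rightarrow> edge list" where
  "Ea a b = concat (map (\<lambda>n. colE a b (int n)) [0..<nat b])"

context
  fixes a b :: int
  assumes pos: "0 < a" and ab: "a < b" and cop: "coprime a b"
begin

lemma b_pos: "0 < b" using pos ab by simp

lemma col_facts:
  assumes "0 \<le> i" "i < b"
  shows "b * J a b i \<le> i * a" "i * a < b * (J a b i + 1)" "0 \<le> J a b i" "J a b i \<le> a - 1"
proof -
  show "b * J a b i \<le> i * a" "i * a < b * (J a b i + 1)" using J_bounds b_pos by auto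
  show "0 \<le> J a b i" using J_nonneg b_pos pos assms by simp
  have "J a b i \<le> J a b (b - 1)" using assms b_pos pos by (intro J_mono) auto
  then show "J a b i \<le> a - 1" using J_qm1 pos ab by simp
qed

lemma Bc_facts:
  assumes "0 \<le> i" "Bc a b i"
  shows "i + 1 < b" "J a b (i + 1) = J a b i + 1" "b * (J a b i + 1) < (i + 1) * a"
proof -
  show "i + 1 < b" "J a b (i + 1) = J a b i + 1" using assms unfolding Bc_def by auto
  then show "b * (J a b i + 1) < (i + 1) * a"
    using J_strict[OF b_pos cop, of "i + 1"] assms by simp
qed

lemma Dblk_props:
  assumes "0 \<le> i" "i < b" "e \<in> set (Dblk a b i)"
  shows "ok a b e \<and> real_of_int i / real_of_int b < hp a b e \<and> hp a b e < real_of_int (i + 1) / real_of_int b"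
proof -
  define j where "j = J a b i"
  have F: "b * j \<le> i * a" "i * a < b * (j + 1)" "0 \<le> j" "j \<le> a - 1"
    using col_facts[OF assms(1,2)] unfolding j_def by auto
  have ab0: "0 < a + b" using pos b_pos by simp
  have D1: "ok a b (Diag, i, j) \<and> real_of_int i / real_of_int b < hp a b (Diag, i, j) \<and> hp a b (Diag, i, j) < real_of_int (i + 1) / real_of_int b"
  proof -
    have "i * (a + b) < (i + j + 1) * b" using F by (simp add: algebra_simps)
    moreover have "(i + j + 1) * b < (i + 1) * (a + b)" using F pos by (simp add: algebra_simps)
    moreover have "ok a b (Diag, i, j)" using F assms pos by (simp add: algebra_simps)
    ultimately show ?thesis by (simp only: hp.simps frac_less[OF b_pos ab0] frac_less[OF ab0 b_pos])
  qed
  show ?thesis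
  proof (cases "Bc a b i")
    case False
    then show ?thesis using assms D1 unfolding Dblk_def j_def by simp
  next
    case True
    have G: "i + 1 < b" "b * (j + 1) < (i + 1) * a" using Bc_facts[OF assms(1) True] unfolding j_def by auto
    have H: "ok a b (Hor, i, j + 1) \<and> real_of_int i / real_of_int b < hp a b (Hor, i, j + 1) \<and> hp a b (Hor, i, j + 1) < real_of_int (i + 1) / real_of_int b"
    proof -
      have "i * a < (j + 1) * b" using F by (simp add: algebra_simps)
      moreover have "(j + 1) * b < (i + 1) * a" using G by (simp add: algebra_simps)
      moreover have "ok a b (Hor, i, j + 1)" using F G by (simp add: algebra_simps)
      ultimately show ?thesis by (simp only: hp.simps frac_less[OF b_pos pos] frac_less[OF pos b_pos])
    qed
    have D2: "ok a b (Diag, i, j + 1) \<and> real_of_int i / real_of_int b < hp a b (Diag, i, j + 1) \<and> hp a b (Diag, i, j + 1) < real_of_int (i + 1) / real_of_int b"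
    proof -
      have "i * (a + b) < (i + (j + 1) + 1) * b" using F by (simp add: algebra_simps)
      moreover have "(i + (j + 1) + 1) * b < (i + 1) * (a + b)" using G by (simp add: algebra_simps)
      moreover have "ok a b (Diag, i, j + 1)" using F G assms by (simp add: algebra_simps)
      ultimately show ?thesis by (simp only: hp.simps frac_less[OF b_pos ab0] frac_less[OF ab0 b_pos])
    qed
    show ?thesis using assms True D1 H D2 unfolding Dblk_def j_def[symmetric] by auto
  qed
qed

lemma Dblk_sorted:
  assumes "0 \<le> i" "i < b"
  shows "sorted_wrt (\<lambda>e f. hp a b e < hp a b f) (Dblk a b i)"
proof (cases "Bc a b i")
  case False then show ?thesis unfolding Dblk_def by simp
next
  case True
  define j where "j = J a b i"
  have F: "b * j \<le> i * a" "i * a < b * (j + 1)" "0 \<le> j" "j \<le> a - 1"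
    using col_facts[OF assms(1,2)] unfolding j_def by auto
  have G: "i + 1 < b" "b * (j + 1) < (i + 1) * a" using Bc_facts[OF assms(1) True] unfolding j_def by auto
  have ab0: "0 < a + b" using pos b_pos by simp
  have "(i + j + 1) * a < (j + 1) * (a + b)" using F by (simp add: algebra_simps)
  then have 1: "hp a b (Diag, i, j) < hp a b (Hor, i, j + 1)"
    by (simp only: hp.simps frac_less[OF ab0 pos])
  have "(j + 1) * (a + b) < (i + (j + 1) + 1) * a" using G by (simp add: algebra_simps)
  then have 2: "hp a b (Hor, i, j + 1) < hp a b (Diag, i, j + 1)"
    by (simp only: hp.simps frac_less[OF pos ab0])
  show ?thesis using True 1 2 unfolding Dblk_def j_def[symmetric] by simp
qed

lemma sepE_props:
  assumes "0 \<le> i" "i < b" "e \<in> set (sepE a b i)"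
  shows "ok a b e \<and> hp a b e = real_of_int (i + 1) / real_of_int b"
proof -
  have i1: "i + 1 < b" and e: "e = (Vert, i + 1, J a b (i + 1))" using assms unfolding sepE_def by (auto split: if_splits)
  have "b * J a b (i + 1) < (i + 1) * a" using J_strict[OF b_pos cop, of "i + 1"] i1 assms by simp
  moreover have "(i + 1) * a < b * (J a b (i + 1) + 1)" using J_bounds b_pos by auto
  ultimately show ?thesis unfolding e using i1 assms by (simp add: algebra_simps)
qed

lemma colE_props:
  assumes "0 \<le> i" "i < b" "e \<in> set (colE a b i)"
  shows "ok a b e \<and> real_of_int i / real_of_int b < hp a b e \<and> hp a b e \<le> real_of_int (i + 1) / real_of_int b"
proof -
  have lt: "real_of_int i / real_of_int b < real_of_int (i + 1) / real_of_int b"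
    using b_pos by (simp add: divide_strict_right_mono)
  show ?thesis using assms Dblk_props[OF assms(1,2), of e] sepE_props[OF assms(1,2), of e] lt
    unfolding colE_def by auto
qed

lemma colE_sorted:
  assumes "0 \<le> i" "i < b"
  shows "sorted_wrt (\<lambda>e f. hp a b e < hp a b f) (colE a b i)"
  unfolding colE_def sorted_wrt_append
proof (intro conjI ballI)
  show "sorted_wrt (\<lambda>e f. hp a b e < hp a b f) (Dblk a b i)" using Dblk_sorted[OF assms] .
  show "sorted_wrt (\<lambda>e f. hp a b e < hp a b f) (sepE a b i)" unfolding sepE_def by simp
  fix x y assume "x \<in> set (Dblk a b i)" "y \<in> set (sepE a b i)"
  then show "hp a b x < hp a b y" using Dblk_props[OF assms] sepE_props[OF assms] by fastforce
qed

lemma Ea_set: "set (Ea a b) = {e. ok a b e}"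
proof (intro set_eqI iffI)
  fix e assume "e \<in> set (Ea a b)"
  then obtain n where "n < nat b" "e \<in> set (colE a b (int n))" unfolding Ea_def by auto
  then show "e \<in> {e. ok a b e}" using colE_props[of "int n" e] by auto
next
  fix e assume "e \<in> {e. ok a b e}"
  then have okE: "ok a b e" by simp
  have mem: "e \<in> set (Ea a b)" if "0 \<le> i" "i < b" "e \<in> set (colE a b i)" for i
  proof -
    have n: "nat i < nat b" using that by auto
    have "e \<in> set (colE a b (int (nat i)))" using that by simp
    moreover have "nat i \<in> set [0..<nat b]" using n by simp
    ultimately show ?thesis unfolding Ea_def set_concat set_map by blast
  qed
  obtain k i j where e: "e = (k, i, j)" by (cases e rule: prod_cases3)
  show "e \<in> set (Ea a b)"
  proof (cases k)
    case Hor
    then have h: "0 \<le> j" "j \<le> a" "i * a < j * b" "j * b < (i + 1) * a" using okE e by auto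
    have s: "0 < j" "j < a" "J b a j = i" using sep_lemma[of a i j b] h pos by (auto simp: mult.commute)
    have kk: "0 \<le> i" "i + 1 < b" "J a b i + 1 = j" "J a b (i + 1) = j"
      using key_lemma[OF pos ab cop s(1,2)] s(3) by auto
    then have "Bc a b i" unfolding Bc_def by simp
    then have "e \<in> set (colE a b i)" using e Hor kk unfolding colE_def Dblk_def by auto
    then show ?thesis using mem kk by simp
  next
    case Vert
    then have h: "0 \<le> i" "i \<le> b" "j * b < i * a" "i * a < (j + 1) * b" using okE e by auto
    have s: "0 < i" "i < b" "J a b i = j" using sep_lemma[of b j i a] h b_pos by (auto simp: mult.commute)
    have "e \<in> set (colE a b (i - 1))" using e Vert s unfolding colE_def sepE_def by auto
    then show ?thesis using mem[of "i - 1"] s by simp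
  next
    case Diag
    then have h: "0 \<le> i + j + 1" "i + j + 1 \<le> a + b" "i * a < (j + 1) * b" "j * b < (i + 1) * a" using okE e by auto
    have d: "0 \<le> i" "i < b" "j = J a b i \<or> (j = J a b i + 1 \<and> J a b (i + 1) = J a b i + 1 \<and> i + 1 < b)"
      using diag_lemma[of a b i j] h pos ab by (auto simp: mult.commute)
    have "e \<in> set (colE a b i)" using d(3) e Diag unfolding colE_def Dblk_def Bc_def by auto
    then show ?thesis using mem d by simp
  qed
qed

lemma Ea_sorted: "sorted_wrt (\<lambda>e f. hp a b e < hp a b f) (Ea a b)"
  unfolding Ea_def
proof (rule sorted_concat_blocks[where lo = "\<lambda>k. real_of_int (int k) / real_of_int b"])
  fix k assume "k < nat b"
  then show "sorted_wrt (\<lambda>e f. hp a b e < hp a b f) (colE a b (int k))" using colE_sorted by simp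
next
  fix k x assume "k < nat b" "x \<in> set (colE a b (int k))"
  then show "real_of_int (int k) / real_of_int b < hp a b x \<and> hp a b x \<le> real_of_int (int (Suc k)) / real_of_int b"
    using colE_props[of "int k" x] by (simp add: add.commute)
next
  fix k k' :: nat assume "k \<le> k'"
  then show "real_of_int (int k) / real_of_int b \<le> real_of_int (int k') / real_of_int b"
    using b_pos by (simp add: divide_right_mono)
qed

lemma omega_edges_lt: "omega_edges a b = Ea a b"
  using omega_edges_from_ok[OF pos b_pos Ea_set Ea_sorted] .

end

definition idx :: "('a \<Rightarrow> bool) \<Rightarrow> 'a list \<Rightarrow> nat list" where
  "idx P xs = filter (\<lambda>i. P (xs ! i)) [0..<length xs]"

definition bbf :: "'a list \<Rightarrow> nat list \<Rightarrow> 'a list list" where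
  "bbf xs ps = map (\<lambda>(i, j). take (j - Suc i) (drop (Suc i) xs)) (zip ps (tl ps))"

lemma between_blocks_bbf: "between_blocks P xs = bbf xs (idx P xs)"
  unfolding between_blocks_def bbf_def idx_def Let_def ..

lemma idx_append: "idx P (xs @ ys) = idx P xs @ map ((+) (length xs)) (idx P ys)"
proof -
  have u: "[0..<length (xs @ ys)] = [0..<length xs] @ map ((+) (length xs)) [0..<length ys]"
  proof -
    have a: "[0..<length xs + length ys] = [0..<length xs] @ [length xs..<length xs + length ys]"
      by (rule upt_add_eq_append) simp
    have "map ((+) (length xs)) [0..<length ys] = map (\<lambda>i. i + length xs) [0..<length ys]"
      by (simp add: add.commute)
    also have "\<dots> = [length xs..<length ys + length xs]" by (rule map_add_upt)
    finally have b: "map ((+) (length xs)) [0..<length ys] = [length xs..<length xs + length ys]"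
      by (simp add: add.commute)
    show ?thesis unfolding length_append a b ..
  qed
  have 1: "filter (\<lambda>i. P ((xs @ ys) ! i)) [0..<length xs] = filter (\<lambda>i. P (xs ! i)) [0..<length xs]"
    by (rule filter_cong) (auto simp: nth_append)
  have 2: "filter (\<lambda>i. P ((xs @ ys) ! i)) (map ((+) (length xs)) [0..<length ys])
      = map ((+) (length xs)) (filter (\<lambda>i. P (ys ! i)) [0..<length ys])"
    by (simp add: filter_map comp_def nth_append)
  show ?thesis unfolding idx_def u filter_append 1 2 ..
qed

lemma idx_noP: "\<forall>x\<in>set xs. \<not> P x \<Longrightarrow> idx P xs = []"
  unfolding idx_def by (auto simp: filter_empty_conv)

lemma idx_single: "P z \<Longrightarrow> idx P [z] = [0]"
  unfolding idx_def by simp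

lemma bbf_shift: "bbf (pre @ ys) (map ((+) (length pre)) ps) = bbf ys ps"
proof -
  have "zip (map ((+) (length pre)) ps) (tl (map ((+) (length pre)) ps))
      = map (\<lambda>(i, j). (length pre + i, length pre + j)) (zip ps (tl ps))"
    by (simp add: map_tl[symmetric] zip_map_map)
  then show ?thesis unfolding bbf_def
    by (auto intro!: map_cong simp: drop_append)
qed

lemma bbf_cons2: "bbf L (i # j # ps) = take (j - Suc i) (drop (Suc i) L) # bbf L (j # ps)"
  unfolding bbf_def by simp

lemma bbf_single: "bbf L [i] = []"
  unfolding bbf_def by simp

lemma BB1: "\<forall>x\<in>set xs. \<not> P x \<Longrightarrow> between_blocks P (xs @ ys) = between_blocks P ys"
  unfolding between_blocks_bbf idx_append using idx_noP[of xs P] bbf_shift by simp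

lemma BB3: "P z \<Longrightarrow> \<forall>x\<in>set xs. \<not> P x \<Longrightarrow> between_blocks P (z # xs) = []"
proof -
  assume a: "P z" "\<forall>x\<in>set xs. \<not> P x"
  have "idx P ([z] @ xs) = [0]" unfolding idx_append using a idx_noP[of xs P] idx_single[of P z] by simp
  then show ?thesis unfolding between_blocks_bbf by (simp add: bbf_single)
qed

lemma BB2:
  assumes "P z" "\<forall>x\<in>set xs. \<not> P x" "P z'"
  shows "between_blocks P (z # xs @ z' # ys) = xs # between_blocks P (z' # ys)"
proof -
  have i2: "idx P (z' # ys) = 0 # map ((+) 1) (idx P ys)"
    using idx_append[of P "[z']" ys] idx_single[of P z'] assms(3) by simp
  have "idx P ([z] @ (xs @ (z' # ys))) = 0 # map ((+) (Suc (length xs))) (idx P (z' # ys))"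
    unfolding idx_append using assms idx_noP[of xs P] idx_single[of P z] by (simp add: comp_def)
  then have i1: "idx P (z # xs @ z' # ys) = 0 # Suc (length xs) # map ((+) (Suc (length xs))) (map ((+) 1) (idx P ys))"
    using i2 by simp
  have "bbf (z # xs @ z' # ys) (idx P (z # xs @ z' # ys))
      = xs # bbf ((z # xs) @ (z' # ys)) (map ((+) (length (z # xs))) (idx P (z' # ys)))"
    unfolding i1 bbf_cons2 i2 by simp
  also have "\<dots> = xs # bbf (z' # ys) (idx P (z' # ys))" by (rule arg_cong[OF bbf_shift])
  finally show ?thesis unfolding between_blocks_bbf .
qed

lemma bb_chain:
  assumes "\<And>k x. x \<in> set (f k) \<Longrightarrow> \<not> P x" "\<And>k. P (s k)" "P z"
  shows "between_blocks P (z # concat (map (\<lambda>k. f k @ [s k]) [m..<M]) @ f M) = map f [m..<M]"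
  using assms(3)
proof (induction "M - m" arbitrary: m z)
  case 0
  then show ?case using BB3[of P z "f M"] assms(1) by auto
next
  case (Suc d)
  then have mM: "m < M" by simp
  have u: "[m..<M] = m # [Suc m..<M]" using mM by (simp add: upt_conv_Cons)
  have "between_blocks P (z # concat (map (\<lambda>k. f k @ [s k]) [m..<M]) @ f M)
      = between_blocks P (z # f m @ s m # (concat (map (\<lambda>k. f k @ [s k]) [Suc m..<M]) @ f M))"
    unfolding u by simp
  also have "\<dots> = f m # between_blocks P (s m # (concat (map (\<lambda>k. f k @ [s k]) [Suc m..<M]) @ f M))"
    using BB2[of P z "f m" "s m"] Suc.prems assms(1,2) by blast
  also have "\<dots> = f m # map f [Suc m..<M]"
    using Suc.hyps(1)[of "Suc m" "s m"] Suc.hyps(2) assms(2) by simp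
  finally show ?case unfolding u by simp
qed

lemma bb_main:
  assumes "\<And>k x. x \<in> set (f k) \<Longrightarrow> \<not> P x" "\<And>k. P (s k)" "2 \<le> N"
  shows "between_blocks P (concat (map (\<lambda>k. f k @ (if k + 1 < N then [s k] else [])) [0..<N])) = map f [1..<N - 1]"
proof -
  let ?g = "\<lambda>k. f k @ (if k + 1 < N then [s k] else [])"
  obtain K where N: "N = Suc (Suc K)" using assms(3) by (metis add_2_eq_Suc le_Suc_ex)
  have u1: "[0..<Suc (Suc K)] = [0..<Suc K] @ [Suc K]" by simp
  have u2: "[0..<Suc K] = 0 # [1..<Suc K]" by (simp add: upt_conv_Cons)
  have u: "[0..<N] = 0 # [1..<N - 1] @ [N - 1]" unfolding N u1 u2 by simp
  have m: "map ?g [1..<N - 1] = map (\<lambda>k. f k @ [s k]) [1..<N - 1]" by (intro map_cong) auto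
  have "concat (map ?g [0..<N]) = ?g 0 @ concat (map ?g [1..<N - 1]) @ ?g (N - 1)"
    unfolding u by simp
  also have "\<dots> = f 0 @ (s 0 # concat (map (\<lambda>k. f k @ [s k]) [1..<N - 1]) @ f (N - 1))"
    unfolding m using assms(3) by simp
  finally have "concat (map ?g [0..<N]) = f 0 @ (s 0 # concat (map (\<lambda>k. f k @ [s k]) [1..<N - 1]) @ f (N - 1))" .
  then have "between_blocks P (concat (map ?g [0..<N])) = between_blocks P (s 0 # concat (map (\<lambda>k. f k @ [s k]) [1..<N - 1]) @ f (N - 1))"
    using BB1[of "f 0" P] assms(1) by simp
  also have "\<dots> = map f [1..<N - 1]" using bb_chain[of f P s "s 0" 1 "N - 1"] assms by simp
  finally show ?thesis .
qed

lemma rec_pt_lattice: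
  assumes "s * real_of_int b = of_int X" "s * real_of_int a = of_int Y"
  shows "rec_pt a b s = (X, Y)"
proof -
  have P: "Lpt a b s = (of_int X, of_int Y)" unfolding Lpt_def using assms by simp
  show ?thesis unfolding rec_pt_def Let_def P
    by (rule the_equality) auto
qed

lemma rec_pt_vert:
  assumes "0 < a" "0 < b" "s * real_of_int b = of_int X" "s * real_of_int a \<notin> \<int>"
  shows "rec_pt a b s = (X, \<lfloor>s * real_of_int a\<rfloor>)"
proof -
  define y where "y = s * real_of_int a"
  have P: "Lpt a b s = (of_int X, y)" unfolding Lpt_def y_def using assms by simp
  have by_: "real_of_int b * y = real_of_int a * of_int X" unfolding y_def using assms(3)[symmetric]
    by (simp add: algebra_simps)
  have fl: "of_int \<lfloor>y\<rfloor> < y" using assms(4) unfolding y_def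
    by (metis Ints_of_int floor_correct order_le_imp_less_or_eq)
  have ce: "y < of_int \<lceil>y\<rceil>" using assms(4) unfolding y_def
    by (metis Ints_of_int ceiling_correct order_le_imp_less_or_eq)
  have B: "real_of_int b > 0" using assms by simp
  have r1: "on_right a b (of_int X, of_int \<lfloor>y\<rfloor>)"
  proof -
    have "real_of_int b * of_int \<lfloor>y\<rfloor> < real_of_int b * y" using fl B by simp
    then show ?thesis unfolding on_right_def using by_ by simp
  qed
  have r2: "\<not> on_right a b (of_int X, of_int \<lceil>y\<rceil>)"
  proof -
    have "real_of_int b * y < real_of_int b * of_int \<lceil>y\<rceil>" using ce B by simp
    then show ?thesis unfolding on_right_def using by_ by simp
  qed
  have ne: "(of_int \<lceil>y\<rceil> :: real) \<noteq> y" using ce by (metis less_irrefl)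
  show ?thesis unfolding rec_pt_def Let_def P y_def[symmetric]
    apply (rule the_equality)
    using r1 r2 ne by auto
qed

lemma rec_pt_hor:
  assumes "0 < a" "0 < b" "s * real_of_int a = of_int Y" "s * real_of_int b \<notin> \<int>"
  shows "rec_pt a b s = (\<lceil>s * real_of_int b\<rceil>, Y)"
proof -
  define x where "x = s * real_of_int b"
  have P: "Lpt a b s = (x, of_int Y)" unfolding Lpt_def x_def using assms by simp
  have bx: "real_of_int b * of_int Y = real_of_int a * x" unfolding x_def using assms(3)[symmetric]
    by (simp add: algebra_simps)
  have fl: "of_int \<lfloor>x\<rfloor> < x" using assms(4) unfolding x_def
    by (metis Ints_of_int floor_correct order_le_imp_less_or_eq)
  have ce: "x < of_int \<lceil>x\<rceil>" using assms(4) unfolding x_def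
    by (metis Ints_of_int ceiling_correct order_le_imp_less_or_eq)
  have A: "real_of_int a > 0" using assms by simp
  have r1: "on_right a b (of_int \<lceil>x\<rceil>, of_int Y)"
  proof -
    have "real_of_int a * x < real_of_int a * of_int \<lceil>x\<rceil>" using ce A by simp
    then show ?thesis unfolding on_right_def using bx by simp
  qed
  have r2: "\<not> on_right a b (of_int \<lfloor>x\<rfloor>, of_int Y)"
  proof -
    have "real_of_int a * of_int \<lfloor>x\<rfloor> < real_of_int a * x" using fl A by simp
    then show ?thesis unfolding on_right_def using bx by simp
  qed
  have ne: "(of_int \<lfloor>x\<rfloor> :: real) \<noteq> x" using fl by (metis less_irrefl)
  have xn: "x \<notin> \<int>" using assms(4) x_def by simp
  show ?thesis unfolding rec_pt_def Let_def P x_def[symmetric]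
    apply (rule the_equality)
    using r1 r2 ne xn by auto
qed

definition Sblk :: "int \<Rightarrow> int \<Rightarrow> int \<Rightarrow> real list" where
  "Sblk a b i = (if Bc a b i then [real_of_int (J a b i + 1) / real_of_int a] else []) @ [real_of_int (i + 1) / real_of_int b]"
definition Sl :: "int \<Rightarrow> int \<Rightarrow> real list" where
  "Sl a b = 0 # concat (map (\<lambda>n. Sblk a b (int n)) [0..<nat b])"

lemma grid_params_sym: "grid_params a b = grid_params b a"
  unfolding grid_params_def by auto

context
  fixes a b :: int
  assumes pos: "0 < a" and ab: "a < b" and cop: "coprime a b"
begin

lemma b_pos': "0 < b" using pos ab by simp

lemma Sblk_props:
  assumes "0 \<le> i" "i < b" "x \<in> set (Sblk a b i)"
  shows "real_of_int i / real_of_int b < x \<and> x \<le> real_of_int (i + 1) / real_of_int b \<and> x \<in> grid_params a b"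
proof -
  have B: "real_of_int b > 0" "real_of_int a > 0" using pos ab by auto
  have F: "b * J a b i \<le> i * a" "i * a < b * (J a b i + 1)" "0 \<le> J a b i" "J a b i \<le> a - 1"
    using col_facts[OF pos ab cop assms(1,2)] by auto
  have last: "real_of_int i / real_of_int b < real_of_int (i + 1) / real_of_int b \<and> real_of_int (i + 1) / real_of_int b \<in> grid_params a b"
  proof -
    have "real_of_int (i + 1) / real_of_int b * real_of_int b = real_of_int (i + 1)" using B by simp
    moreover have "0 \<le> real_of_int (i + 1) / real_of_int b" using assms B by simp
    moreover have "real_of_int (i + 1) / real_of_int b \<le> 1" using assms B by simp
    ultimately show ?thesis unfolding grid_params_def using B by (auto simp: divide_strict_right_mono)
  qed
  show ?thesis
  proof (cases "Bc a b i")
    case False then show ?thesis using assms last unfolding Sblk_def by auto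
  next
    case True
    have G: "b * (J a b i + 1) < (i + 1) * a" using Bc_facts[OF pos ab cop assms(1) True] by simp
    define y where "y = real_of_int (J a b i + 1) / real_of_int a"
    have y1: "real_of_int i / real_of_int b < y" unfolding y_def using F
      by (simp only: frac_less[OF b_pos' pos]) (simp add: algebra_simps)
    have y2: "y < real_of_int (i + 1) / real_of_int b" unfolding y_def using G
      by (simp only: frac_less[OF pos b_pos']) (simp add: algebra_simps)
    have y3: "y \<in> grid_params a b"
    proof -
      have "y * real_of_int a = real_of_int (J a b i + 1)" unfolding y_def using B by simp
      moreover have "0 \<le> y" unfolding y_def using F B by simp
      moreover have "y \<le> 1" unfolding y_def using F B by simp
      ultimately show ?thesis unfolding grid_params_def by auto
    qed
    show ?thesis using assms last True y1 y2 y3 unfolding Sblk_def y_def[symmetric] by auto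
  qed
qed

lemma Sblk_sorted:
  assumes "0 \<le> i" "i < b"
  shows "sorted_wrt (\<lambda>x y. id x < id y) (Sblk a b i)"
proof (cases "Bc a b i")
  case False then show ?thesis unfolding Sblk_def by simp
next
  case True
  have G: "b * (J a b i + 1) < (i + 1) * a" using Bc_facts[OF pos ab cop assms(1) True] by simp
  have "real_of_int (J a b i + 1) / real_of_int a < real_of_int (i + 1) / real_of_int b" using G
    by (simp only: frac_less[OF pos b_pos']) (simp add: algebra_simps)
  then show ?thesis using True unfolding Sblk_def by simp
qed

lemma Sl_sorted: "sorted_wrt (<) (Sl a b)"
proof -
  have c: "sorted_wrt (\<lambda>x y. id x < id y) (concat (map (\<lambda>n. Sblk a b (int n)) [0..<nat b]))"
  proof (rule sorted_concat_blocks[where lo = "\<lambda>k. real_of_int (int k) / real_of_int b"])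
    fix k assume "k < nat b"
    then show "sorted_wrt (\<lambda>x y. id x < id y) (Sblk a b (int k))" using Sblk_sorted by simp
  next
    fix k x assume "k < nat b" "x \<in> set (Sblk a b (int k))"
    then show "real_of_int (int k) / real_of_int b < id x \<and> id x \<le> real_of_int (int (Suc k)) / real_of_int b"
      using Sblk_props[of "int k" x] by (simp add: add.commute)
  next
    fix k k' :: nat assume "k \<le> k'"
    then show "real_of_int (int k) / real_of_int b \<le> real_of_int (int k') / real_of_int b"
      using b_pos' by (simp add: divide_right_mono)
  qed
  have p: "\<forall>x\<in>set (concat (map (\<lambda>n. Sblk a b (int n)) [0..<nat b])). 0 < x"
  proof
    fix x assume "x \<in> set (concat (map (\<lambda>n. Sblk a b (int n)) [0..<nat b]))"
    then obtain k where k: "k < nat b" "x \<in> set (Sblk a b (int k))" by auto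
    then have "real_of_int (int k) / real_of_int b < x" using Sblk_props[of "int k" x] by simp
    moreover have "0 \<le> real_of_int (int k) / real_of_int b" using b_pos' by simp
    ultimately show "0 < x" by linarith
  qed
  show ?thesis unfolding Sl_def using c p by simp
qed

lemma Sl_set: "set (Sl a b) = grid_params a b"
proof (intro set_eqI iffI)
  fix x assume "x \<in> set (Sl a b)"
  then show "x \<in> grid_params a b"
  proof (cases "x = 0")
    case True then show ?thesis unfolding grid_params_def by simp
  next
    case False
    with \<open>x \<in> set (Sl a b)\<close> obtain k where "k < nat b" "x \<in> set (Sblk a b (int k))" unfolding Sl_def by auto
    then show ?thesis using Sblk_props[of "int k" x] by simp
  qed
next
  fix x assume x: "x \<in> grid_params a b"
  have B: "real_of_int b > 0" "real_of_int a > 0" using pos ab by auto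
  have mem: "x \<in> set (Sl a b)" if "0 \<le> i" "i < b" "x \<in> set (Sblk a b i)" for i
  proof -
    have n: "nat i < nat b" using that by auto
    have "x \<in> set (Sblk a b (int (nat i)))" using that by simp
    moreover have "nat i \<in> set [0..<nat b]" using n by simp
    ultimately have "x \<in> set (concat (map (\<lambda>n. Sblk a b (int n)) [0..<nat b]))"
      unfolding set_concat set_map by blast
    then show ?thesis unfolding Sl_def by simp
  qed
  have x01: "0 \<le> x" "x \<le> 1" using x unfolding grid_params_def by auto
  consider "x * real_of_int b \<in> \<int>" | "x * real_of_int a \<in> \<int>" using x unfolding grid_params_def by auto
  then show "x \<in> set (Sl a b)"
  proof cases
    case 1
    then obtain k where k: "x * real_of_int b = of_int k" by (elim Ints_cases)
    have xk: "x = real_of_int k / real_of_int b" using k B by (simp add: eq_divide_eq)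
    have k0: "0 \<le> k" using k x01 B by (metis mult_nonneg_nonneg of_int_0_le_iff less_imp_le)
    have kb: "k \<le> b"
    proof -
      have "x * real_of_int b \<le> 1 * real_of_int b" using x01 B by (intro mult_right_mono) auto
      then show ?thesis using k by simp
    qed
    show ?thesis
    proof (cases "k = 0")
      case True then show ?thesis using xk unfolding Sl_def by simp
    next
      case False
      then have "x \<in> set (Sblk a b (k - 1))" using xk unfolding Sblk_def by simp
      then show ?thesis using mem[of "k - 1"] k0 kb False by simp
    qed
  next
    case 2
    then obtain k where k: "x * real_of_int a = of_int k" by (elim Ints_cases)
    have xk: "x = real_of_int k / real_of_int a" using k B by (simp add: eq_divide_eq)
    have k0: "0 \<le> k" using k x01 B by (metis mult_nonneg_nonneg of_int_0_le_iff less_imp_le)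
    have ka: "k \<le> a"
    proof -
      have "x * real_of_int a \<le> 1 * real_of_int a" using x01 B by (intro mult_right_mono) auto
      then show ?thesis using k by simp
    qed
    show ?thesis
    proof (cases "k = 0")
      case True then show ?thesis using xk unfolding Sl_def by simp
    next
      case k0': False
      show ?thesis
      proof (cases "k = a")
        case True
        then have "x = real_of_int ((b - 1) + 1) / real_of_int b" using xk B by simp
        then have "x \<in> set (Sblk a b (b - 1))" unfolding Sblk_def by simp
        then show ?thesis using mem[of "b - 1"] b_pos' by simp
      next
        case False
        then have kk: "0 < k" "k < a" using k0 k0' ka by auto
        define i where "i = J b a k"
        have key: "0 \<le> i" "i + 1 < b" "J a b i + 1 = k" "J a b (i + 1) = k"
          using key_lemma[OF pos ab cop kk] unfolding i_def by auto
        then have "Bc a b i" unfolding Bc_def by simp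
        then have "x \<in> set (Sblk a b i)" using xk key unfolding Sblk_def by simp
        then show ?thesis using mem[of i] key by simp
      qed
    qed
  qed
qed

lemma sorted_grid: "sorted_list_of_set (grid_params a b) = Sl a b"
proof -
  have "sorted (Sl a b)" "distinct (Sl a b)" using Sl_sorted by (auto simp: strict_sorted_iff)
  then show ?thesis unfolding Sl_set[symmetric] sorted_list_of_set_sort_remdups
    by (simp add: distinct_remdups_id sorted_sort_id)
qed

end

lemma those_map_Some: "those (map (\<lambda>x. Some (f x)) xs) = Some (map f xs)"
  by (induction xs) auto

lemma remdups_rep: "remdups_adj (x # replicate k x @ zs) = remdups_adj (x # zs)"
  by (induction k) auto

lemma remdups_blk:
  assumes "x \<noteq> y"
  shows "remdups_adj (x # replicate k x @ replicate l y @ [y]) = [x, y]"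
proof -
  have "replicate l y @ [y] = replicate (Suc l) y" by (simp add: replicate_append_same)
  then have "remdups_adj (x # replicate k x @ replicate l y @ [y]) = remdups_adj (x # replicate (Suc l) y)"
    using remdups_rep[of x k "replicate l y @ [y]"] by simp
  also have "\<dots> = [x, y]" using assms by (simp add: remdups_adj_Cons remdups_adj_replicate)
  finally show ?thesis .
qed

lemma remdups_blocks:
  assumes "\<And>i. i < n \<Longrightarrow> g i \<noteq> g (Suc i)"
  shows "remdups_adj (g 0 # concat (map (\<lambda>i. replicate (k i) (g i) @ replicate (l i) (g (Suc i)) @ [g (Suc i)]) [0..<n]))
     = map g [0..<Suc n]"
  using assms
proof (induction n)
  case 0 then show ?case by simp
next
  case (Suc n)
  let ?B = "\<lambda>i. replicate (k i) (g i) @ replicate (l i) (g (Suc i)) @ [g (Suc i)]"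
  let ?L = "g 0 # concat (map ?B [0..<n])"
  have lastL: "last ?L = g n"
  proof (cases n)
    case 0 then show ?thesis by simp
  next
    case (Suc m)
    then have "concat (map ?B [0..<n]) = concat (map ?B [0..<m]) @ ?B m" by simp
    then show ?thesis using Suc by simp
  qed
  have "butlast ?L @ [last ?L] = ?L" by (rule append_butlast_last_id) simp
  then have "butlast ?L @ [g n] = ?L" by (simp only: lastL)
  then obtain pre where pre: "?L = pre @ [g n]" by (rule that[OF sym])
  have "remdups_adj (?L @ ?B n) = remdups_adj (pre @ g n # ?B n)"
    unfolding pre by simp
  also have "\<dots> = remdups_adj (pre @ [g n]) @ tl (remdups_adj (g n # ?B n))"
    by (rule remdups_adj_append)
  also have "\<dots> = remdups_adj ?L @ [g (Suc n)]"
    unfolding pre[symmetric] using remdups_blk[of "g n" "g (Suc n)" "k n" "l n"] Suc.prems by simp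
  also have "\<dots> = map g [0..<Suc n] @ [g (Suc n)]" using Suc by simp
  finally show ?case by simp
qed

lemma zip_map_tl: "zip (map g [0..<Suc n]) (tl (map g [0..<Suc n])) = map (\<lambda>i. (g i, g (Suc i))) [0..<n]"
  by (rule nth_equalityI) (auto simp: nth_tl simp del: upt_Suc)

context
  fixes a b :: int
  assumes pos: "0 < a" and ab: "a < b" and cop: "coprime a b"
begin

lemma bpos: "0 < b" using pos ab by simp

lemma RP0: "rec_pt a b 0 = (0, 0)"
  by (rule rec_pt_lattice) simp_all

lemma RP1:
  assumes "0 \<le> i" "i < b"
  shows "rec_pt a b (real_of_int (i + 1) / real_of_int b) = (i + 1, J a b (i + 1))"
proof (cases "i + 1 = b")
  case True
  have "real_of_int (i + 1) / real_of_int b = 1" using True bpos by simp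
  moreover have "J a b (i + 1) = a" using True J_q bpos by simp
  ultimately show ?thesis using True by (simp add: rec_pt_lattice)
next
  case False
  have B: "real_of_int b > 0" using bpos by simp
  let ?s = "real_of_int (i + 1) / real_of_int b"
  have sb: "?s * real_of_int b = real_of_int (i + 1)" using B by simp
  have sa: "?s * real_of_int a = real_of_int ((i + 1) * a) / real_of_int b" by simp
  have ni: "?s * real_of_int a \<notin> \<int>"
  proof
    assume "?s * real_of_int a \<in> \<int>"
    then obtain m where m: "?s * real_of_int a = of_int m" by (elim Ints_cases)
    then have "real_of_int ((i + 1) * a) = real_of_int (b * m)" using B sa by (simp add: divide_eq_eq mult.commute)
    then have "(i + 1) * a = b * m" by (simp only: of_int_eq_iff)
    then have "b dvd (i + 1) * a" by simp
    then show False using not_dvd_coprime[OF cop, of "i + 1"] assms False by simp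
  qed
  have "rec_pt a b ?s = (i + 1, \<lfloor>?s * real_of_int a\<rfloor>)" by (rule rec_pt_vert[OF pos bpos sb ni])
  also have "\<lfloor>?s * real_of_int a\<rfloor> = J a b (i + 1)" unfolding sa J_def by (rule floor_divide_of_int_eq)
  finally show ?thesis .
qed

lemma RP2:
  assumes "0 \<le> i" "Bc a b i"
  shows "rec_pt a b (real_of_int (J a b i + 1) / real_of_int a) = (i + 1, J a b i + 1)"
proof -
  have A: "real_of_int a > 0" using pos by simp
  have G: "b * (J a b i + 1) < (i + 1) * a" using Bc_facts[OF pos ab cop assms] by simp
  have i_lt: "i < b" using assms unfolding Bc_def by simp
  have F: "i * a < b * (J a b i + 1)" using col_facts[OF pos ab cop assms(1) i_lt] by simp
  let ?s = "real_of_int (J a b i + 1) / real_of_int a"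
  have sa: "?s * real_of_int a = real_of_int (J a b i + 1)" using A by simp
  have e: "?s * real_of_int b = real_of_int ((J a b i + 1) * b) / real_of_int a" by simp
  have x1: "real_of_int i < ?s * real_of_int b"
  proof -
    have "real_of_int (i * a) < real_of_int ((J a b i + 1) * b)" using F by (simp only: of_int_less_iff) (simp add: algebra_simps)
    then have "real_of_int i * real_of_int a < real_of_int ((J a b i + 1) * b)" by (simp only: of_int_mult)
    then show ?thesis unfolding e using A by (simp only: pos_less_divide_eq)
  qed
  have x2: "?s * real_of_int b < real_of_int (i + 1)"
  proof -
    have "real_of_int ((J a b i + 1) * b) < real_of_int ((i + 1) * a)" using G by (simp only: of_int_less_iff) (simp add: algebra_simps)
    then have "real_of_int ((J a b i + 1) * b) < real_of_int (i + 1) * real_of_int a" by (simp only: of_int_mult)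
    then show ?thesis unfolding e using A by (simp only: pos_divide_less_eq)
  qed
  have ni: "?s * real_of_int b \<notin> \<int>"
  proof
    assume "?s * real_of_int b \<in> \<int>"
    then obtain m where m: "?s * real_of_int b = of_int m" by (elim Ints_cases)
    then have "i < m" "m < i + 1" using x1 x2 by (simp_all only: of_int_less_iff[symmetric])
    then show False by simp
  qed
  have "rec_pt a b ?s = (\<lceil>?s * real_of_int b\<rceil>, J a b i + 1)" by (rule rec_pt_hor[OF pos bpos sa ni])
  also have "\<lceil>?s * real_of_int b\<rceil> = i + 1" using x1 x2 by (intro ceiling_unique) simp_all
  finally show ?thesis .
qed

lemma cohn_points_lt: "cohn_points a b = map (\<lambda>n. (int n, J a b (int n))) [0..<Suc (nat b)]"
proof -
  let ?g = "\<lambda>n. (int n, J a b (int n))"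
  have blk: "map (rec_pt a b) (Sblk a b (int n)) =
     replicate 0 (?g n) @ replicate (if Bc a b (int n) then 1 else 0) (?g (Suc n)) @ [?g (Suc n)]"
    if "n < nat b" for n
  proof -
    have n: "0 \<le> int n" "int n < b" using that by auto
    have r1: "rec_pt a b (real_of_int (int n + 1) / real_of_int b) = ?g (Suc n)"
      using RP1[OF n] by (simp add: add.commute)
    show ?thesis
    proof (cases "Bc a b (int n)")
      case True
      have "rec_pt a b (real_of_int (J a b (int n) + 1) / real_of_int a) = ?g (Suc n)"
        using RP2[OF n(1) True] True unfolding Bc_def by (simp add: add.commute)
      then show ?thesis using True r1 unfolding Sblk_def by simp
    next
      case False
      then show ?thesis using r1 unfolding Sblk_def by simp
    qed
  qed
  have mp: "map (rec_pt a b) (Sl a b) = ?g 0 # concat (map (\<lambda>n.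
     replicate 0 (?g n) @ replicate (if Bc a b (int n) then 1 else 0) (?g (Suc n)) @ [?g (Suc n)]) [0..<nat b])"
  proof -
    have m: "map (\<lambda>n. map (rec_pt a b) (Sblk a b (int n))) [0..<nat b] = map (\<lambda>n.
       replicate 0 (?g n) @ replicate (if Bc a b (int n) then 1 else 0) (?g (Suc n)) @ [?g (Suc n)]) [0..<nat b]"
      by (rule map_cong[OF refl]) (rule blk, simp)
    have "map (rec_pt a b) (Sl a b) = rec_pt a b 0 # concat (map (\<lambda>n. map (rec_pt a b) (Sblk a b (int n))) [0..<nat b])"
      unfolding Sl_def by (simp add: map_concat comp_def)
    then show ?thesis unfolding m RP0 by simp
  qed
  show ?thesis unfolding cohn_points_def sorted_grid[OF pos ab cop] mp
    by (rule remdups_blocks) simp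
qed

lemma cohn_ab_lt: "cohn_ab a b = Some (map (\<lambda>n. if J a b (int n + 1) = J a b (int n) then Cp else Cq) [0..<nat b])"
proof -
  let ?g = "\<lambda>n. (int n, J a b (int n))"
  have seg: "seg_letter (?g n) (?g (Suc n)) = Some (if J a b (int n + 1) = J a b (int n) then Cp else Cq)" for n
  proof -
    have "J a b (int n) \<le> J a b (int n + 1)" using bpos pos by (intro J_mono) auto
    moreover have "J a b (int n + 1) \<le> J a b (int n) + 1" using bpos pos ab by (intro J_step) auto
    moreover have gs: "?g (Suc n) = (int n + 1, J a b (int n + 1))" by (simp add: add.commute)
    ultimately show ?thesis unfolding gs seg_letter_def Let_def by auto
  qed
  show ?thesis unfolding cohn_ab_def Let_def cohn_points_lt zip_map_tl
    using seg by (simp add: case_prod_beta those_map_Some[symmetric] comp_def)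
qed

end

lemma upt_split2: "2 \<le> N \<Longrightarrow> [0..<N] = 0 # [1..<N - 1] @ [N - 1]"
proof -
  assume "2 \<le> N"
  then obtain K where N: "N = Suc (Suc K)" by (metis add_2_eq_Suc le_Suc_ex)
  have u1: "[0..<Suc (Suc K)] = [0..<Suc K] @ [Suc K]" by simp
  have u2: "[0..<Suc K] = 0 # [1..<Suc K]" by (simp add: upt_conv_Cons)
  show ?thesis unfolding N u1 u2 by simp
qed

context
  fixes a b :: int
  assumes pos: "0 < a" and ab: "a < b" and cop: "coprime a b"
begin

lemma b2: "2 \<le> nat b" using pos ab by simp

lemma w_lt: "those (map block_lt (between_blocks (\<lambda>l. fst l = GZ) (map (edge_letter a b) (omega_edges a b))))
   = Some (map (\<lambda>k. if Bc a b (int k) then Cq else Cp) [1..<nat b - 1])"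
proof -
  let ?el = "edge_letter a b"
  let ?f = "\<lambda>k. map ?el (Dblk a b (int k))"
  let ?s = "\<lambda>k. ?el (Vert, int k + 1, J a b (int k + 1))"
  have E: "map ?el (omega_edges a b) = concat (map (\<lambda>k. ?f k @ (if k + 1 < nat b then [?s k] else [])) [0..<nat b])"
  proof -
    have c: "(int k + 1 < b) = (Suc k < nat b)" for k by auto
    show ?thesis unfolding omega_edges_lt[OF pos ab cop] Ea_def colE_def sepE_def
      apply (simp add: map_concat comp_def c)
      apply (intro arg_cong[where f = concat] map_cong refl)
      apply auto
      done
  qed
  have bb: "between_blocks (\<lambda>l. fst l = GZ) (map ?el (omega_edges a b)) = map ?f [1..<nat b - 1]"
    unfolding E
  proof (rule bb_main[OF _ _ b2])
    fix k x assume "x \<in> set (?f k)"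
    then show "\<not> fst x = GZ" unfolding Dblk_def edge_letter_def by (auto split: if_splits)
  next
    fix k show "fst (?s k) = GZ" unfolding edge_letter_def by simp
  qed
  have bl: "block_lt (?f k) = Some (if Bc a b (int k) then Cq else Cp)" for k
    unfolding Dblk_def edge_letter_def by simp
  show ?thesis unfolding bb map_map comp_def bl by (rule those_map_Some)
qed

lemma cohn_lt: "cohn_ab a b = Some ([Cp] @ map (\<lambda>k. if Bc a b (int k) then Cq else Cp) [1..<nat b - 1] @ [Cq])"
proof -
  let ?L = "\<lambda>n. if J a b (int n + 1) = J a b (int n) then Cp else Cq"
  have L0: "?L 0 = Cp" using J_1[of a b] pos ab by simp
  have bb: "int (nat b - 1) = b - 1" "int (nat b - 1) + 1 = b" using b2 by auto
  have Lb: "?L (nat b - 1) = Cq" unfolding bb using J_q[of b a] J_qm1[of a b] pos ab by simp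
  have Lm: "map ?L [1..<nat b - 1] = map (\<lambda>k. if Bc a b (int k) then Cq else Cp) [1..<nat b - 1]"
  proof (rule map_cong[OF refl])
    fix k assume "k \<in> set [1..<nat b - 1]"
    then have k: "int k + 1 < b" "0 \<le> int k" by auto
    have "J a b (int k) \<le> J a b (int k + 1)" using pos ab by (intro J_mono) auto
    moreover have "J a b (int k + 1) \<le> J a b (int k) + 1" using pos ab by (intro J_step) auto
    ultimately show "?L k = (if Bc a b (int k) then Cq else Cp)" unfolding Bc_def using k by auto
  qed
  show ?thesis unfolding cohn_ab_lt[OF pos ab cop] upt_split2[OF b2]
    using L0 Lb Lm by simp
qed

end

definition Mg :: "int \<Rightarrow> int \<Rightarrow> nat \<Rightarrow> int" where
  "Mg a b n = (if n = 0 then 0 else if int n = a then b else J b a (int n) + 1)"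

context
  fixes a b :: int
  assumes bpos: "0 < b" and ba: "b < a" and cop: "coprime a b"
begin

lemma cop': "coprime b a" using cop by (simp add: coprime_commute)
lemma apos: "0 < a" using bpos ba by simp

lemma omega_edges_gt: "omega_edges a b = map sw (Ea b a)"
  by (rule omega_edges_swap[OF apos bpos Ea_set[OF bpos ba cop'] Ea_sorted[OF bpos ba cop']])

lemma w_gt: "those (map block_gt (between_blocks (\<lambda>l. fst l = GX) (map (edge_letter a b) (omega_edges a b))))
   = Some (map (\<lambda>k. if Bc b a (int k) then Cq else Cr) [1..<nat a - 1])"
proof -
  let ?el = "\<lambda>e. edge_letter a b (sw e)"
  let ?f = "\<lambda>k. map ?el (Dblk b a (int k))"
  let ?s = "\<lambda>k. ?el (Vert, int k + 1, J b a (int k + 1))"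
  have a2: "2 \<le> nat a" using b2[OF bpos ba cop'] .
  have E: "map (edge_letter a b) (omega_edges a b) = concat (map (\<lambda>k. ?f k @ (if k + 1 < nat a then [?s k] else [])) [0..<nat a])"
  proof -
    have c: "(int k + 1 < a) = (Suc k < nat a)" for k by auto
    show ?thesis unfolding omega_edges_gt Ea_def colE_def sepE_def
      apply (simp add: map_concat comp_def c)
      apply (intro arg_cong[where f = concat] map_cong refl)
      apply auto
      done
  qed
  have bb: "between_blocks (\<lambda>l. fst l = GX) (map (edge_letter a b) (omega_edges a b)) = map ?f [1..<nat a - 1]"
    unfolding E
  proof (rule bb_main[OF _ _ a2])
    fix k x assume "x \<in> set (?f k)"
    then show "\<not> fst x = GX" unfolding Dblk_def edge_letter_def by (auto split: if_splits)
  next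
    fix k show "fst (?s k) = GX" unfolding edge_letter_def by simp
  qed
  have bl: "block_gt (?f k) = Some (if Bc b a (int k) then Cq else Cr)" for k
    unfolding Dblk_def edge_letter_def by simp
  show ?thesis unfolding bb map_map comp_def bl by (rule those_map_Some)
qed

lemma RQ1:
  assumes "0 \<le> i" "i < a"
  shows "rec_pt a b (real_of_int (i + 1) / real_of_int a) = (Mg a b (nat (i + 1)), i + 1)"
proof (cases "i + 1 = a")
  case True
  have "real_of_int (i + 1) / real_of_int a = 1" using True apos by simp
  moreover have "Mg a b (nat (i + 1)) = b" unfolding Mg_def using True assms by simp
  ultimately show ?thesis using True by (simp add: rec_pt_lattice)
next
  case False
  have A: "real_of_int a > 0" using apos by simp
  let ?s = "real_of_int (i + 1) / real_of_int a"
  have sa: "?s * real_of_int a = real_of_int (i + 1)" using A by simp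
  have sb: "?s * real_of_int b = real_of_int ((i + 1) * b) / real_of_int a" by simp
  have ni: "?s * real_of_int b \<notin> \<int>"
  proof
    assume "?s * real_of_int b \<in> \<int>"
    then obtain m where m: "?s * real_of_int b = of_int m" by (elim Ints_cases)
    then have "real_of_int ((i + 1) * b) = real_of_int (a * m)" using A sb by (simp add: divide_eq_eq mult.commute)
    then have "(i + 1) * b = a * m" by (simp only: of_int_eq_iff)
    then have "a dvd (i + 1) * b" by simp
    then show False using not_dvd_coprime[OF cop', of "i + 1"] assms False by simp
  qed
  have "rec_pt a b ?s = (\<lceil>?s * real_of_int b\<rceil>, i + 1)" by (rule rec_pt_hor[OF apos bpos sa ni])
  also have "\<lceil>?s * real_of_int b\<rceil> = \<lfloor>?s * real_of_int b\<rfloor> + 1"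
  proof -
    have "?s * real_of_int b \<noteq> of_int \<lfloor>?s * real_of_int b\<rfloor>" using ni Ints_of_int by metis
    then show ?thesis by (simp only: ceiling_altdef if_False)
  qed
  also have "\<lfloor>?s * real_of_int b\<rfloor> = J b a (i + 1)" unfolding sb J_def by (rule floor_divide_of_int_eq)
  also have "J b a (i + 1) + 1 = Mg a b (nat (i + 1))" unfolding Mg_def using assms False by simp
  finally show ?thesis .
qed

lemma Bc0: "\<not> Bc b a 0"
  unfolding Bc_def using J_1[of b a] bpos ba by simp

lemma RQ2:
  assumes "0 \<le> i" "Bc b a i"
  shows "rec_pt a b (real_of_int (J b a i + 1) / real_of_int b) = (Mg a b (nat i), i)"
proof -
  have B: "real_of_int b > 0" using bpos by simp
  have G: "a * (J b a i + 1) < (i + 1) * b" using Bc_facts[OF bpos ba cop' assms] by simp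
  have i_lt: "i + 1 < a" using assms unfolding Bc_def by simp
  have F: "i * b < a * (J b a i + 1)" using col_facts[OF bpos ba cop' assms(1)] i_lt by simp
  have i0: "i \<noteq> 0" using Bc0 assms by auto
  let ?s = "real_of_int (J b a i + 1) / real_of_int b"
  have sb: "?s * real_of_int b = real_of_int (J b a i + 1)" using B by simp
  have e: "?s * real_of_int a = real_of_int ((J b a i + 1) * a) / real_of_int b" by simp
  have x1: "real_of_int i < ?s * real_of_int a"
  proof -
    have "real_of_int (i * b) < real_of_int ((J b a i + 1) * a)" using F by (simp only: of_int_less_iff) (simp add: algebra_simps)
    then have "real_of_int i * real_of_int b < real_of_int ((J b a i + 1) * a)" by (simp only: of_int_mult)
    then show ?thesis unfolding e using B by (simp only: pos_less_divide_eq)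
  qed
  have x2: "?s * real_of_int a < real_of_int (i + 1)"
  proof -
    have "real_of_int ((J b a i + 1) * a) < real_of_int ((i + 1) * b)" using G by (simp only: of_int_less_iff) (simp add: algebra_simps)
    then have "real_of_int ((J b a i + 1) * a) < real_of_int (i + 1) * real_of_int b" by (simp only: of_int_mult)
    then show ?thesis unfolding e using B by (simp only: pos_divide_less_eq)
  qed
  have ni: "?s * real_of_int a \<notin> \<int>"
  proof
    assume "?s * real_of_int a \<in> \<int>"
    then obtain m where m: "?s * real_of_int a = of_int m" by (elim Ints_cases)
    then have "i < m" "m < i + 1" using x1 x2 by (simp_all only: of_int_less_iff[symmetric])
    then show False by simp
  qed
  have r: "rec_pt a b ?s = (J b a i + 1, \<lfloor>?s * real_of_int a\<rfloor>)" by (rule rec_pt_vert[OF apos bpos sb ni])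
  have fl: "\<lfloor>?s * real_of_int a\<rfloor> = i" using x1 x2 by (intro floor_unique) simp_all
  have mg: "J b a i + 1 = Mg a b (nat i)" unfolding Mg_def using assms i0 i_lt by simp
  show ?thesis by (rule trans[OF r]) (simp only: fl, simp only: mg)
qed

end

context
  fixes a b :: int
  assumes bpos: "0 < b" and ba: "b < a" and cop: "coprime a b"
begin

lemma a2': "2 \<le> nat a" using bpos ba by simp

lemma cohn_points_gt: "cohn_points a b = map (\<lambda>n. (Mg a b n, int n)) [0..<Suc (nat a)]"
proof -
  let ?g = "\<lambda>n. (Mg a b n, int n)"
  have cop': "coprime b a" using cop by (simp add: coprime_commute)
  have blk: "map (rec_pt a b) (Sblk b a (int n)) =
     replicate (if Bc b a (int n) then 1 else 0) (?g n) @ replicate 0 (?g (Suc n)) @ [?g (Suc n)]"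
    if "n < nat a" for n
  proof -
    have n: "0 \<le> int n" "int n < a" using that by auto
    have r1: "rec_pt a b (real_of_int (int n + 1) / real_of_int a) = ?g (Suc n)"
      using RQ1[OF bpos ba cop n] by (simp add: nat_add_distrib add.commute)
    show ?thesis
    proof (cases "Bc b a (int n)")
      case True
      have "rec_pt a b (real_of_int (J b a (int n) + 1) / real_of_int b) = ?g n"
        using RQ2[OF bpos ba cop n(1) True] by simp
      then show ?thesis using True r1 unfolding Sblk_def by simp
    next
      case False
      then show ?thesis using r1 unfolding Sblk_def by simp
    qed
  qed
  have mp: "map (rec_pt a b) (Sl b a) = ?g 0 # concat (map (\<lambda>n.
     replicate (if Bc b a (int n) then 1 else 0) (?g n) @ replicate 0 (?g (Suc n)) @ [?g (Suc n)]) [0..<nat a])"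
  proof -
    have m: "map (\<lambda>n. map (rec_pt a b) (Sblk b a (int n))) [0..<nat a] = map (\<lambda>n.
       replicate (if Bc b a (int n) then 1 else 0) (?g n) @ replicate 0 (?g (Suc n)) @ [?g (Suc n)]) [0..<nat a]"
      by (rule map_cong[OF refl]) (rule blk, simp)
    have "map (rec_pt a b) (Sl b a) = rec_pt a b 0 # concat (map (\<lambda>n. map (rec_pt a b) (Sblk b a (int n))) [0..<nat a])"
      unfolding Sl_def by (simp add: map_concat comp_def)
    moreover have "rec_pt a b 0 = ?g 0" using rec_pt_lattice[of 0 b 0 a 0] by (simp add: Mg_def)
    ultimately show ?thesis unfolding m by simp
  qed
  have gs: "sorted_list_of_set (grid_params a b) = Sl b a"
    using sorted_grid[OF bpos ba cop'] grid_params_sym[of a b] by simp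
  show ?thesis unfolding cohn_points_def gs mp
    by (rule remdups_blocks) simp
qed

lemma Mg_step:
  assumes "n < nat a"
  shows "Mg a b n \<le> Mg a b (Suc n) \<and> Mg a b (Suc n) \<le> Mg a b n + 1"
    "n = 0 \<Longrightarrow> Mg a b (Suc n) = Mg a b n + 1"
    "Suc n = nat a \<Longrightarrow> Mg a b (Suc n) = Mg a b n"
    "0 < n \<Longrightarrow> Suc n < nat a \<Longrightarrow> (Mg a b (Suc n) = Mg a b n \<longleftrightarrow> \<not> Bc b a (int n))"
proof -
  have J1: "J b a 1 = 0" using J_1[of b a] bpos ba by simp
  have a1: "int (Suc 0) \<noteq> a" using a2' by auto
  have M1: "Mg a b (Suc 0) = 1" unfolding Mg_def using a1 J1 by simp
  show "n = 0 \<Longrightarrow> Mg a b (Suc n) = Mg a b n + 1" using M1 by (simp add: Mg_def)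
  have last: "Mg a b (Suc n) = Mg a b n" if "Suc n = nat a"
  proof -
    have n0: "n \<noteq> 0" using that a2' by auto
    have "int n = a - 1" using that by auto
    moreover have "J b a (a - 1) = b - 1" using J_qm1[of b a] bpos ba by simp
    ultimately show ?thesis unfolding Mg_def using that n0 apos[OF bpos ba] by auto
  qed
  show "Suc n = nat a \<Longrightarrow> Mg a b (Suc n) = Mg a b n" using last by simp
  have mid: "Mg a b (Suc n) = J b a (int n + 1) + 1 \<and> Mg a b n = J b a (int n) + 1" if "0 < n" "Suc n < nat a"
    unfolding Mg_def using that by (auto simp: add.commute)
  have st: "J b a (int n) \<le> J b a (int n + 1) \<and> J b a (int n + 1) \<le> J b a (int n) + 1"
    using bpos ba by (auto intro: J_mono J_step)
  show "0 < n \<Longrightarrow> Suc n < nat a \<Longrightarrow> (Mg a b (Suc n) = Mg a b n \<longleftrightarrow> \<not> Bc b a (int n))"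
    using mid st unfolding Bc_def by auto
  show "Mg a b n \<le> Mg a b (Suc n) \<and> Mg a b (Suc n) \<le> Mg a b n + 1"
  proof (cases "n = 0")
    case True then show ?thesis using M1 by (simp add: Mg_def)
  next
    case False
    show ?thesis
    proof (cases "Suc n = nat a")
      case True then show ?thesis using last by simp
    next
      case False
      then have "Suc n < nat a" using assms by simp
      then show ?thesis using mid st \<open>n \<noteq> 0\<close> by simp
    qed
  qed
qed

lemma cohn_ab_gt: "cohn_ab a b = Some (map (\<lambda>n. if Mg a b (Suc n) = Mg a b n then Cr else Cq) [0..<nat a])"
proof -
  let ?g = "\<lambda>n. (Mg a b n, int n)"
  have seg: "seg_letter (?g n) (?g (Suc n)) = Some (if Mg a b (Suc n) = Mg a b n then Cr else Cq)" if "n < nat a" for n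
    using Mg_step(1)[OF that] unfolding seg_letter_def Let_def by auto
  have "map (\<lambda>(P, Q). seg_letter P Q) (map (\<lambda>i. (?g i, ?g (Suc i))) [0..<nat a])
      = map (\<lambda>n. Some (if Mg a b (Suc n) = Mg a b n then Cr else Cq)) [0..<nat a]"
    using seg by auto
  then show ?thesis unfolding cohn_ab_def Let_def cohn_points_gt zip_map_tl
    by (simp only: those_map_Some)
qed

lemma cohn_gt: "cohn_ab a b = Some ([Cq] @ map (\<lambda>k. if Bc b a (int k) then Cq else Cr) [1..<nat a - 1] @ [Cr])"
proof -
  let ?L = "\<lambda>n. if Mg a b (Suc n) = Mg a b n then Cr else Cq"
  have L0: "?L 0 = Cq" using Mg_step(2)[of 0] a2' by simp
  have Lb: "?L (nat a - 1) = Cr" using Mg_step(3)[of "nat a - 1"] a2' by simp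
  have Lm: "map ?L [1..<nat a - 1] = map (\<lambda>k. if Bc b a (int k) then Cq else Cr) [1..<nat a - 1]"
  proof (rule map_cong[OF refl])
    fix k assume "k \<in> set [1..<nat a - 1]"
    then have k: "0 < k" "Suc k < nat a" by auto
    show "?L k = (if Bc b a (int k) then Cq else Cr)" using Mg_step(4)[OF _ k] k by auto
  qed
  show ?thesis unfolding cohn_ab_gt upt_split2[OF a2'] using L0 Lb Lm by simp
qed

end

theorem theorem4p7:
  fixes t :: rat
  assumes "0 < t" and "t \<noteq> 1"
  shows "(t < 1 \<longrightarrow> (\<exists>w. w_word t = Some w \<and> cohn_word t = Some ([Cp] @ w @ [Cq])))
       \<and> (1 < t \<longrightarrow> (\<exists>w. w_word t = Some w \<and> cohn_word t = Some ([Cq] @ w @ [Cr])))"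
proof -
  obtain a b where q: "quotient_of t = (a, b)" by (cases "quotient_of t")
  have b0: "0 < b" using quotient_of_denom_pos[OF q] .
  have cop: "coprime a b" using quotient_of_coprime[OF q] .
  have td: "t = of_int a / of_int b" using quotient_of_div[OF q] .
  have B: "(0::rat) < of_int b" using b0 by simp
  have a0: "0 < a"
  proof -
    have "(0::rat) < of_int a / of_int b" using assms(1) td by simp
    then have "(0::rat) < of_int a" using B by (simp add: zero_less_divide_iff)
    then show ?thesis by simp
  qed
  have lt_iff: "t < 1 \<longleftrightarrow> a < b"
  proof -
    have "t < 1 \<longleftrightarrow> (of_int a :: rat) < of_int b" unfolding td using B by (simp add: divide_less_eq_1_pos)
    then show ?thesis by simp
  qed
  have gt_iff: "1 < t \<longleftrightarrow> b < a"
  proof -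
    have "1 < t \<longleftrightarrow> (of_int b :: rat) < of_int a" unfolding td using B by (simp add: less_divide_eq_1_pos)
    then show ?thesis by simp
  qed
  have om: "omega t = map (edge_letter a b) (omega_edges a b)"
    unfolding omega_def q omega_ab_def by simp
  have cw: "cohn_word t = cohn_ab a b" unfolding cohn_word_def q by simp
  show ?thesis
  proof (intro conjI impI)
    assume t1: "t < 1"
    then have ab: "a < b" using lt_iff by simp
    have "w_word t = Some (map (\<lambda>k. if Bc a b (int k) then Cq else Cp) [1..<nat b - 1])"
      unfolding w_word_def using t1 om w_lt[OF a0 ab cop] by simp
    then show "\<exists>w. w_word t = Some w \<and> cohn_word t = Some ([Cp] @ w @ [Cq])"
      using cw cohn_lt[OF a0 ab cop] by (intro exI[of _ "map (\<lambda>k. if Bc a b (int k) then Cq else Cp) [1..<nat b - 1]"]) simp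
  next
    assume t1: "1 < t"
    then have ba: "b < a" using gt_iff by simp
    have "w_word t = Some (map (\<lambda>k. if Bc b a (int k) then Cq else Cr) [1..<nat a - 1])"
      unfolding w_word_def using t1 om w_gt[OF b0 ba cop] by simp
    then show "\<exists>w. w_word t = Some w \<and> cohn_word t = Some ([Cq] @ w @ [Cr])"
      using cw cohn_gt[OF b0 ba cop] by (intro exI[of _ "map (\<lambda>k. if Bc b a (int k) then Cq else Cr) [1..<nat a - 1]"]) simp
  qed
qed


end
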